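(* Fix a risk level $\alpha\in(0,1)$ and a transient MDP with a sink state as in the context. Let $\delta>0$ and let $\beta_0>0$ (with $\beta_0<-\log(\alpha)/\delta$) be chosen such that $g^\star_\infty(0)-g^\star_\infty(\beta_0)\le\delta$. Let \[ (\pi^\star,\beta^\star)\in\arg\max_{(\pi,\beta)\in\Pi_{\mathrm{SD}}\times\mathcal B(\beta_0,\delta)}h_\infty(\pi,\beta). \] Then the limits below exist and \[ \lim_{t\to\infty}\mathrm{EVaR}^{\pi^\star,\mu}_\alpha\Big[\sum_{k=0}^t r(\tilde s_k,\tilde a_k,\tilde s_{k+1})\Big]\;\ge\;\sup_{\pi\in\Pi_{\mathrm{HR}}}\lim_{t\to\infty}\sup_{\beta>0}h_t(\pi,\beta)-\delta. \]
   Context: MDP: states $\bar{\mathcal S}=\{1,\dots,S,S+1\}$, $e:=S+1$ a sink state, $\mathcal S=\{1,\dots,S\}$; finite actions; transitions $p(s,a,s')$, real rewards $r(s,a,s')$ of arbitrary sign; $p(e,a,e)=1$, $r(e,a,e)=0$; initial distribution $\mu$ on $\mathcal S$ with $\mu>0$. $\Pi_{\mathrm{HR}}$: history-dependent randomized policies; $\Pi_{\mathrm{SD}}$: stationary deterministic policies. Transience: for every $\pi\in\Pi_{\mathrm{SD}}$, $\sum_{t\ge0}\mathbb P^{\pi,s}[\tilde s_t=s']<\infty$ for all $s,s'\in\mathcal S$. $\mathrm{ERM}_\beta[\tilde x]=-\beta^{-1}\log\mathbb E e^{-\beta\tilde x}$ for $\beta>0$, $\mathrm{ERM}_0=\mathbb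 E$. $\mathrm{EVaR}_\alpha[\tilde x]=\sup_{\beta>0}\big(\mathrm{ERM}_\beta[\tilde x]+\beta^{-1}\log\alpha\big)$. $g_t(\pi,\beta)=\mathrm{ERM}^{\pi,\mu}_\beta[\sum_{k=0}^t r(\tilde s_k,\tilde a_k,\tilde s_{k+1})]$, $g^\star_t(\beta)=\sup_{\pi\in\Pi_{\mathrm{HR}}}g_t(\pi,\beta)$, $g_\infty(\pi,\beta)=\liminf_t g_t(\pi,\beta)$, $g^\star_\infty(\beta)=\liminf_t g^\star_t(\beta)$ (for $\beta=0$ defined via expectation). $h_t(\pi,\beta)=g_t(\pi,\beta)+\beta^{-1}\log\alpha$, $h_\infty(\pi,\beta)=g_\infty(\pi,\beta)+\beta^{-1}\log\alpha$. The finite set $\mathcal B(\beta_0,\delta)=\{\beta_0,\beta_1,\dots,\beta_K\}$ with $0<\beta_0<\beta_1<\dots<\beta_K$ is given by $\beta_{k+1}=\frac{\beta_k\log\alpha}{\beta_k\delta+\log\alpha}$ for the intermediate indices (i.e. $\beta_{k+1}^{-1}=\beta_k^{-1}+\delta/\log\alpha$), continued while the values stay below $-\log(\alpha)/\delta$, and $\beta_K=-\log(\alpha)/\delta$. *)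

theory Defs
  imports "HOL-Analysis.Analysis"
begin

text \<open>
  Finite MDP with states 1..S+1 (state S+1 is the sink e), actions drawn from a
  finite type 'a, transition function p, reward function r.
  A history-dependent randomized policy maps the past state-action pairs
  (s_0,a_0),...,(s_{k-1},a_{k-1}) and the current state s_k to a distribution over
  actions.  All quantities at finite horizon are computed as finite sums over
  finite trajectories s_0,a_0,...,s_{n-1},a_{n-1},s_n.
\<close>

type_synonym 'a policy = "(nat \<times> 'a) list \<Rightarrow> nat \<Rightarrow> 'a \<Rightarrow> real"

definition HR_policies :: "('a::finite) policy set" where
  "HR_policies = {\<pi>. \<forall>h s. (\<forall>a. 0 \<le> \<pi> h s a) \<and> (\<Sum>a\<in>UNIV. \<pi> h s a) = 1}"

definition sd_policy :: "(nat \<Rightarrow> 'a) \<Rightarrow> 'a policy" where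
  "sd_policy d = (\<lambda>h s a. if a = d s then 1 else 0)"

definition paths :: "nat \<Rightarrow> nat \<Rightarrow> (nat list \<times> ('a::finite) list) set" where
  "paths S n = {(ss, as). length ss = Suc n \<and> set ss \<subseteq> {1..Suc S} \<and> length as = n}"

definition path_weight ::
  "(nat \<Rightarrow> 'a \<Rightarrow> nat \<Rightarrow> real) \<Rightarrow> 'a policy \<Rightarrow> (nat \<Rightarrow> real) \<Rightarrow> nat
     \<Rightarrow> nat list \<Rightarrow> 'a list \<Rightarrow> real" where
  "path_weight p \<pi> \<nu> n ss as =
     \<nu> (ss ! 0) * (\<Prod>k<n. \<pi> (zip (take k ss) (take k as)) (ss ! k) (as ! k)
                          * p (ss ! k) (as ! k) (ss ! Suc k))"

definition expect ::
  "(nat \<Rightarrow> 'a::finite \<Rightarrow> nat \<Rightarrow> real) \<Rightarrow> nat \<Rightarrow> 'a policy \<Rightarrow> (nat \<Rightarrow> real) \<Rightarrow> nat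
     \<Rightarrow> (nat list \<Rightarrow> 'a list \<Rightarrow> real) \<Rightarrow> real" where
  "expect p S \<pi> \<nu> n f = (\<Sum>(ss, as)\<in>paths S n. path_weight p \<pi> \<nu> n ss as * f ss as)"

definition erm ::
  "(nat \<Rightarrow> 'a::finite \<Rightarrow> nat \<Rightarrow> real) \<Rightarrow> nat \<Rightarrow> 'a policy \<Rightarrow> (nat \<Rightarrow> real) \<Rightarrow> nat
     \<Rightarrow> real \<Rightarrow> (nat list \<Rightarrow> 'a list \<Rightarrow> real) \<Rightarrow> real" where
  "erm p S \<pi> \<nu> n \<beta> f =
     (if \<beta> = 0 then expect p S \<pi> \<nu> n f
      else - (1 / \<beta>) * ln (expect p S \<pi> \<nu> n (\<lambda>ss as. exp (- \<beta> * f ss as))))"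

definition evar ::
  "(nat \<Rightarrow> 'a::finite \<Rightarrow> nat \<Rightarrow> real) \<Rightarrow> nat \<Rightarrow> 'a policy \<Rightarrow> (nat \<Rightarrow> real) \<Rightarrow> nat
     \<Rightarrow> real \<Rightarrow> (nat list \<Rightarrow> 'a list \<Rightarrow> real) \<Rightarrow> real" where
  "evar p S \<pi> \<nu> n \<alpha> f = Sup ((\<lambda>\<beta>. erm p S \<pi> \<nu> n \<beta> f + ln \<alpha> / \<beta>) ` {0<..})"

definition ret :: "(nat \<Rightarrow> 'a \<Rightarrow> nat \<Rightarrow> real) \<Rightarrow> nat \<Rightarrow> nat list \<Rightarrow> 'a list \<Rightarrow> real" where
  "ret r n ss as = (\<Sum>k<n. r (ss ! k) (as ! k) (ss ! Suc k))"

text \<open>g_t(\<pi>,\<beta>) = ERM_\<beta>[sum_{k=0}^t r(s_k,a_k,s_{k+1})] (t+1 transitions).\<close>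
definition g_t ::
  "(nat \<Rightarrow> 'a::finite \<Rightarrow> nat \<Rightarrow> real) \<Rightarrow> (nat \<Rightarrow> 'a \<Rightarrow> nat \<Rightarrow> real) \<Rightarrow> nat \<Rightarrow> (nat \<Rightarrow> real)
     \<Rightarrow> 'a policy \<Rightarrow> real \<Rightarrow> nat \<Rightarrow> real" where
  "g_t p r S \<mu> \<pi> \<beta> t = erm p S \<pi> \<mu> (Suc t) \<beta> (ret r (Suc t))"

definition gstar_t ::
  "(nat \<Rightarrow> 'a::finite \<Rightarrow> nat \<Rightarrow> real) \<Rightarrow> (nat \<Rightarrow> 'a \<Rightarrow> nat \<Rightarrow> real) \<Rightarrow> nat \<Rightarrow> (nat \<Rightarrow> real)
     \<Rightarrow> real \<Rightarrow> nat \<Rightarrow> real" where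
  "gstar_t p r S \<mu> \<beta> t = Sup ((\<lambda>\<pi>. g_t p r S \<mu> \<pi> \<beta> t) ` HR_policies)"

definition g_inf ::
  "(nat \<Rightarrow> 'a::finite \<Rightarrow> nat \<Rightarrow> real) \<Rightarrow> (nat \<Rightarrow> 'a \<Rightarrow> nat \<Rightarrow> real) \<Rightarrow> nat \<Rightarrow> (nat \<Rightarrow> real)
     \<Rightarrow> 'a policy \<Rightarrow> real \<Rightarrow> ereal" where
  "g_inf p r S \<mu> \<pi> \<beta> = liminf (\<lambda>t. ereal (g_t p r S \<mu> \<pi> \<beta> t))"

definition gstar_inf ::
  "(nat \<Rightarrow> 'a::finite \<Rightarrow> nat \<Rightarrow> real) \<Rightarrow> (nat \<Rightarrow> 'a \<Rightarrow> nat \<Rightarrow> real) \<Rightarrow> nat \<Rightarrow> (nat \<Rightarrow> real)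
     \<Rightarrow> real \<Rightarrow> ereal" where
  "gstar_inf p r S \<mu> \<beta> = liminf (\<lambda>t. ereal (gstar_t p r S \<mu> \<beta> t))"

definition h_t ::
  "(nat \<Rightarrow> 'a::finite \<Rightarrow> nat \<Rightarrow> real) \<Rightarrow> (nat \<Rightarrow> 'a \<Rightarrow> nat \<Rightarrow> real) \<Rightarrow> nat \<Rightarrow> (nat \<Rightarrow> real)
     \<Rightarrow> real \<Rightarrow> 'a policy \<Rightarrow> real \<Rightarrow> nat \<Rightarrow> real" where
  "h_t p r S \<mu> \<alpha> \<pi> \<beta> t = g_t p r S \<mu> \<pi> \<beta> t + ln \<alpha> / \<beta>"

definition h_inf ::
  "(nat \<Rightarrow> 'a::finite \<Rightarrow> nat \<Rightarrow> real) \<Rightarrow> (nat \<Rightarrow> 'a \<Rightarrow> nat \<Rightarrow> real) \<Rightarrow> nat \<Rightarrow> (nat \<Rightarrow> real)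
     \<Rightarrow> real \<Rightarrow> 'a policy \<Rightarrow> real \<Rightarrow> ereal" where
  "h_inf p r S \<mu> \<alpha> \<pi> \<beta> = g_inf p r S \<mu> \<pi> \<beta> + ereal (ln \<alpha> / \<beta>)"

definition beta_grid :: "real \<Rightarrow> real \<Rightarrow> real \<Rightarrow> real set" where
  "beta_grid \<alpha> \<beta>0 \<delta> =
     {\<beta>. \<exists>k::nat. 0 < 1 / \<beta>0 + real k * \<delta> / ln \<alpha>
               \<and> \<beta> = 1 / (1 / \<beta>0 + real k * \<delta> / ln \<alpha>) \<and> \<beta> < - ln \<alpha> / \<delta>}
     \<union> {- ln \<alpha> / \<delta>}"

text \<open>Transience: for every SD policy, expected visits to each non-sink state are finite.\<close>
definition transient :: "(nat \<Rightarrow> 'a::finite \<Rightarrow> nat \<Rightarrow> real) \<Rightarrow> nat \<Rightarrow> bool" where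
  "transient p S \<longleftrightarrow>
     (\<forall>d::nat \<Rightarrow> 'a. \<forall>s\<in>{1..S}. \<forall>s'\<in>{1..S}.
        summable (\<lambda>t. expect p S (sd_policy d) (\<lambda>x. if x = s then 1 else 0) t
                        (\<lambda>ss as. if last ss = s' then 1 else 0)))"

end

theory Submission
  imports Defs
begin

declare sum.cl_ivl_Suc[simp del] prod.cl_ivl_Suc[simp del]

definition dlt :: "nat \<Rightarrow> nat \<Rightarrow> real" where "dlt s = (\<lambda>x. if x = s then 1 else 0)"
definition shift :: "'a policy \<Rightarrow> nat \<Rightarrow> 'a \<Rightarrow> 'a policy" where
  "shift \<pi> s a = (\<lambda>h. \<pi> ((s,a)#h))"

lemma finite_paths: "finite (paths S n :: (nat list \<times> ('a::finite) list) set)"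
proof -
  have "paths S n \<subseteq> {ss. set ss \<subseteq> {1..Suc S} \<and> length ss = Suc n} \<times> {as::'a list. set as \<subseteq> UNIV \<and> length as = n}"
    by (auto simp: paths_def)
  moreover have "finite ({ss. set ss \<subseteq> {1..Suc S} \<and> length ss = Suc n} \<times> {as::'a list. set as \<subseteq> UNIV \<and> length as = n})"
    by (intro finite_cartesian_product finite_lists_length_eq) auto
  ultimately show ?thesis by (rule finite_subset)
qed

lemma paths_0: "paths S 0 = (\<lambda>s. ([s],[])) ` {1..Suc S}"
proof (rule set_eqI, rule iffI)
  fix x assume "x \<in> paths S 0"
  then obtain ss as where x: "x = (ss,as)" "length ss = 1" "set ss \<subseteq> {1..Suc S}" "as = []"
    by (auto simp: paths_def)
  then obtain s where "ss = [s]" by (metis One_nat_def length_0_conv length_Suc_conv)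
  with x show "x \<in> (\<lambda>s. ([s],[])) ` {1..Suc S}" by auto
qed (auto simp: paths_def)

lemma paths_Suc: "paths S (Suc n) = (\<lambda>(s0,a0,(ss,as)). (s0#ss, a0#as)) ` ({1..Suc S} \<times> UNIV \<times> paths S n)"
proof (rule set_eqI, rule iffI)
  fix x assume "x \<in> paths S (Suc n)"
  then obtain ss as where x: "x = (ss,as)" "length ss = Suc (Suc n)" "set ss \<subseteq> {1..Suc S}" "length as = Suc n"
    by (auto simp: paths_def)
  then obtain s0 ss' where ss: "ss = s0 # ss'" by (metis length_Suc_conv)
  from x obtain a0 as' where as: "as = a0 # as'" by (metis length_Suc_conv)
  have "(s0, a0, (ss', as')) \<in> {1..Suc S} \<times> UNIV \<times> paths S n"
    using x ss as by (auto simp: paths_def)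
  then show "x \<in> (\<lambda>(s0,a0,(ss,as)). (s0#ss, a0#as)) ` ({1..Suc S} \<times> UNIV \<times> paths S n)"
    using x ss as by (auto intro!: image_eqI[where x="(s0, a0, (ss', as'))"])
qed (auto simp: paths_def)

lemma inj_cons_paths: "inj_on (\<lambda>(s0,a0,(ss,as)). (s0#ss, a0#as)) X"
  by (auto simp: inj_on_def)

lemma path_weight_Suc:
  "path_weight p \<pi> \<nu> (Suc n) (s0#ss) (a0#as) =
     \<nu> s0 * \<pi> [] s0 a0 * path_weight p (shift \<pi> s0 a0) (p s0 a0) n ss as"
  unfolding path_weight_def shift_def
  by (simp add: prod.lessThan_Suc_shift del: prod.lessThan_Suc)

lemma expect_Suc:
  "expect p S \<pi> \<nu> (Suc n) f = (\<Sum>s0\<in>{1..Suc S}. \<Sum>a0\<in>UNIV. \<nu> s0 * \<pi> [] s0 a0 *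
      expect p S (shift \<pi> s0 a0) (p s0 a0) n (\<lambda>ss as. f (s0#ss) (a0#as)))"
proof -
  have "expect p S \<pi> \<nu> (Suc n) f =
     (\<Sum>x\<in>{1..Suc S} \<times> UNIV \<times> paths S n. (case x of (s0,a0,(ss,as)) \<Rightarrow>
        path_weight p \<pi> \<nu> (Suc n) (s0#ss) (a0#as) * f (s0#ss) (a0#as)))"
    unfolding expect_def paths_Suc
    by (subst sum.reindex[OF inj_cons_paths]) (simp add: case_prod_beta)
  also have "\<dots> = (\<Sum>s0\<in>{1..Suc S}. \<Sum>a0\<in>UNIV. \<Sum>(ss,as)\<in>paths S n.
        path_weight p \<pi> \<nu> (Suc n) (s0#ss) (a0#as) * f (s0#ss) (a0#as))"
    by (simp add: sum.cartesian_product case_prod_beta)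
  also have "\<dots> = (\<Sum>s0\<in>{1..Suc S}. \<Sum>a0\<in>UNIV. \<nu> s0 * \<pi> [] s0 a0 *
      expect p S (shift \<pi> s0 a0) (p s0 a0) n (\<lambda>ss as. f (s0#ss) (a0#as)))"
    unfolding expect_def path_weight_Suc
    by (simp add: sum_distrib_left case_prod_beta mult.assoc)
  finally show ?thesis .
qed

lemma expect_0: "expect p S \<pi> \<nu> 0 f = (\<Sum>s\<in>{1..Suc S}. \<nu> s * f [s] [])"
  unfolding expect_def paths_0
  by (subst sum.reindex) (auto simp: inj_on_def path_weight_def)

lemma expect_cong:
  "(\<And>ss as. (ss,as)\<in>paths S n \<Longrightarrow> f ss as = g ss as) \<Longrightarrow> expect p S \<pi> \<nu> n f = expect p S \<pi> \<nu> n g"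
  unfolding expect_def by (intro sum.cong) auto

lemma expect_add: "expect p S \<pi> \<nu> n (\<lambda>ss as. f ss as + g ss as) = expect p S \<pi> \<nu> n f + expect p S \<pi> \<nu> n g"
  unfolding expect_def by (simp add: sum.distrib case_prod_beta distrib_left)

lemma expect_scale: "expect p S \<pi> \<nu> n (\<lambda>ss as. c * f ss as) = c * expect p S \<pi> \<nu> n f"
  unfolding expect_def by (simp add: sum_distrib_left case_prod_beta algebra_simps)

lemma expect_sum: "finite I \<Longrightarrow> expect p S \<pi> \<nu> n (\<lambda>ss as. \<Sum>i\<in>I. f i ss as) = (\<Sum>i\<in>I. expect p S \<pi> \<nu> n (f i))"
  unfolding expect_def by (simp add: sum_distrib_left case_prod_beta sum.swap[where A=I])

lemma paths_hd: "(ss,as) \<in> paths S n \<Longrightarrow> ss ! 0 \<in> {1..Suc S}"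
  unfolding paths_def by (cases ss) auto

lemma paths_last: "(ss,as) \<in> paths S n \<Longrightarrow> last ss \<in> {1..Suc S}"
proof -
  assume "(ss,as) \<in> paths S n"
  then have "ss \<noteq> []" "set ss \<subseteq> {1..Suc S}" by (auto simp: paths_def)
  then show ?thesis using last_in_set by blast
qed

lemma paths_nonempty: "(ss,as) \<in> paths S n \<Longrightarrow> ss \<noteq> []"
  unfolding paths_def by auto

lemma expect_lin:
  fixes h :: "nat list \<Rightarrow> 'a::finite list \<Rightarrow> real"
  shows "expect p S \<pi> \<nu> n (\<lambda>ss as. g (ss!0) * h ss as) = (\<Sum>s\<in>{1..Suc S}. \<nu> s * g s * expect p S \<pi> (dlt s) n h)"
proof -
  have "expect p S \<pi> \<nu> n (\<lambda>ss as. g (ss!0) * h ss as) =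
    (\<Sum>(ss,as)\<in>paths S n. \<Sum>s\<in>{1..Suc S}. \<nu> s * g s * (path_weight p \<pi> (dlt s) n ss as * h ss as))"
    unfolding expect_def
  proof (intro sum.cong refl, clarify)
    fix ss and as :: "'a list" assume P: "(ss,as) \<in> paths S n"
    have "(\<Sum>s\<in>{1..Suc S}. \<nu> s * g s * (path_weight p \<pi> (dlt s) n ss as * h ss as))
        = (\<Sum>s\<in>{1..Suc S}. if s = ss!0 then \<nu> s * g s * (path_weight p \<pi> (dlt s) n ss as * h ss as) else 0)"
      by (intro sum.cong refl) (auto simp: path_weight_def dlt_def)
    also have "\<dots> = \<nu> (ss!0) * g (ss!0) * (path_weight p \<pi> (dlt (ss!0)) n ss as * h ss as)"
      using paths_hd[OF P] by simp
    also have "\<dots> = path_weight p \<pi> \<nu> n ss as * (g (ss ! 0) * h ss as)"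
      by (simp add: path_weight_def dlt_def)
    finally show "path_weight p \<pi> \<nu> n ss as * (g (ss ! 0) * h ss as) =
      (\<Sum>s\<in>{1..Suc S}. \<nu> s * g s * (path_weight p \<pi> (dlt s) n ss as * h ss as))" by simp
  qed
  also have "\<dots> = (\<Sum>s\<in>{1..Suc S}. \<nu> s * g s * expect p S \<pi> (dlt s) n h)"
    unfolding expect_def
    by (simp only: sum_distrib_left split_beta') (rule sum.swap)
  finally show ?thesis .
qed

lemma expect_mu: "expect p S \<pi> \<nu> n h = (\<Sum>s\<in>{1..Suc S}. \<nu> s * expect p S \<pi> (dlt s) n h)"
  using expect_lin[of p S \<pi> \<nu> n "\<lambda>_. 1" h] by simp

lemma ret_Suc: "ret r (Suc n) (s#ss) (a#as) = r s a (ss!0) + ret r n ss as"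
  unfolding ret_def by (simp add: sum.lessThan_Suc_shift del: sum.lessThan_Suc)

lemma ret_0: "ret r 0 ss as = 0" unfolding ret_def by simp

locale mdp =
  fixes p :: "nat \<Rightarrow> 'a::finite \<Rightarrow> nat \<Rightarrow> real" and r :: "nat \<Rightarrow> 'a \<Rightarrow> nat \<Rightarrow> real" and S :: nat
  assumes p_nonneg: "\<forall>s\<in>{1..Suc S}. \<forall>a. \<forall>s'\<in>{1..Suc S}. 0 \<le> p s a s'"
    and p_sum: "\<forall>s\<in>{1..Suc S}. \<forall>a. (\<Sum>s'\<in>{1..Suc S}. p s a s') = 1"
    and sink_p: "\<forall>a. p (Suc S) a (Suc S) = 1"
    and sink_r: "\<forall>a. r (Suc S) a (Suc S) = 0"
    and trans: "transient p S"
begin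

definition W :: "real \<Rightarrow> nat \<Rightarrow> 'a \<Rightarrow> nat \<Rightarrow> real" where
  "W \<beta> s a s1 = p s a s1 * exp (- \<beta> * r s a s1)"

lemma p_nn: "s \<in> {1..Suc S} \<Longrightarrow> s1 \<in> {1..Suc S} \<Longrightarrow> 0 \<le> p s a s1"
  using p_nonneg by auto

lemma p_sum1: "s \<in> {1..Suc S} \<Longrightarrow> (\<Sum>s'\<in>{1..Suc S}. p s a s') = 1"
  using p_sum by auto

lemma W_nn: "s \<in> {1..Suc S} \<Longrightarrow> s1 \<in> {1..Suc S} \<Longrightarrow> 0 \<le> W \<beta> s a s1"
  unfolding W_def using p_nn by simp

lemma p_sink_other: assumes "s1 \<in> {1..Suc S}" "s1 \<noteq> Suc S" shows "p (Suc S) a s1 = 0"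
proof -
  have "1 = (\<Sum>s'\<in>{1..Suc S}. p (Suc S) a s')" using p_sum1[of "Suc S" a] by simp
  also have "\<dots> = p (Suc S) a (Suc S) + (\<Sum>s'\<in>{1..Suc S} - {Suc S}. p (Suc S) a s')"
    by (subst sum.remove[of _ "Suc S"]) auto
  finally have "(\<Sum>s'\<in>{1..Suc S} - {Suc S}. p (Suc S) a s') = 0" using sink_p by simp
  moreover have "\<forall>s'\<in>{1..Suc S} - {Suc S}. 0 \<le> p (Suc S) a s'" using p_nn by auto
  ultimately have "\<forall>x\<in>{1..Suc S} - {Suc S}. p (Suc S) a x = 0"
    using sum_nonneg_eq_0_iff[of "{1..Suc S} - {Suc S}" "p (Suc S) a"] by auto
  then show ?thesis using assms by auto
qed

lemma sum_dlt: "s \<in> A \<Longrightarrow> finite A \<Longrightarrow> (\<Sum>x\<in>A. dlt s x * f x) = f s"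
proof -
  assume "s \<in> A" "finite A"
  have "(\<Sum>x\<in>A. dlt s x * f x) = (\<Sum>x\<in>A. if x = s then f x else 0)"
    by (intro sum.cong) (auto simp: dlt_def)
  then show ?thesis using \<open>s \<in> A\<close> \<open>finite A\<close> by simp
qed

lemma swap3:
  fixes x :: "'b \<Rightarrow> real"
  shows "(\<Sum>j\<in>J. \<Sum>a\<in>A. x a * (\<Sum>s\<in>B. w a s * f j a s)) = (\<Sum>a\<in>A. x a * (\<Sum>s\<in>B. w a s * (\<Sum>j\<in>J. f j a s)))"
proof -
  have "(\<Sum>j\<in>J. \<Sum>a\<in>A. x a * (\<Sum>s\<in>B. w a s * f j a s)) = (\<Sum>j\<in>J. \<Sum>a\<in>A. \<Sum>s\<in>B. x a * w a s * f j a s)"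
    by (simp add: sum_distrib_left mult.assoc)
  also have "\<dots> = (\<Sum>a\<in>A. \<Sum>j\<in>J. \<Sum>s\<in>B. x a * w a s * f j a s)" by (rule sum.swap)
  also have "\<dots> = (\<Sum>a\<in>A. \<Sum>s\<in>B. \<Sum>j\<in>J. x a * w a s * f j a s)" by (simp add: sum.swap[of _ J])
  also have "\<dots> = (\<Sum>a\<in>A. x a * (\<Sum>s\<in>B. w a s * (\<Sum>j\<in>J. f j a s)))"
    by (simp add: sum_distrib_left mult.assoc)
  finally show ?thesis .
qed

lemma W_sink: "s1 \<in> {1..Suc S} \<Longrightarrow> W \<beta> (Suc S) a s1 = (if s1 = Suc S then 1 else 0)"
  unfolding W_def using p_sink_other sink_p sink_r by auto

lemma sum_W_sink: "(\<Sum>s1\<in>{1..Suc S}. W \<beta> (Suc S) a s1 * f s1) = f (Suc S)"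
proof -
  have "(\<Sum>s1\<in>{1..Suc S}. W \<beta> (Suc S) a s1 * f s1) = (\<Sum>s1\<in>{1..Suc S}. if s1 = Suc S then f s1 else 0)"
    by (intro sum.cong) (auto simp: W_sink)
  then show ?thesis by simp
qed

lemma W0: "W 0 = p" unfolding W_def by (simp add: fun_eq_iff)

definition Phi :: "real \<Rightarrow> (nat \<Rightarrow> real) \<Rightarrow> nat \<Rightarrow> 'a policy \<Rightarrow> nat \<Rightarrow> real" where
  "Phi \<beta> X n \<pi> s = expect p S \<pi> (dlt s) n (\<lambda>ss as. exp (- \<beta> * ret r n ss as) * X (last ss))"

lemma Phi_0: "s \<in> {1..Suc S} \<Longrightarrow> Phi \<beta> X 0 \<pi> s = X s"
  unfolding Phi_def expect_0 by (simp add: sum_dlt ret_0)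

lemma Phi_Suc: assumes s: "s \<in> {1..Suc S}"
  shows "Phi \<beta> X (Suc n) \<pi> s = (\<Sum>a\<in>UNIV. \<pi> [] s a * (\<Sum>s1\<in>{1..Suc S}. W \<beta> s a s1 * Phi \<beta> X n (shift \<pi> s a) s1))"
proof -
  have "Phi \<beta> X (Suc n) \<pi> s = (\<Sum>s0\<in>{1..Suc S}. \<Sum>a0\<in>UNIV. dlt s s0 * \<pi> [] s0 a0 *
      expect p S (shift \<pi> s0 a0) (p s0 a0) n (\<lambda>ss as. exp (- \<beta> * ret r (Suc n) (s0#ss) (a0#as)) * X (last (s0#ss))))"
    unfolding Phi_def expect_Suc by simp
  also have "\<dots> = (\<Sum>a0\<in>UNIV. \<pi> [] s a0 *
      expect p S (shift \<pi> s a0) (p s a0) n (\<lambda>ss as. exp (- \<beta> * ret r (Suc n) (s#ss) (a0#as)) * X (last (s#ss))))"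
  proof -
    have "(\<Sum>s0\<in>{1..Suc S}. \<Sum>a0\<in>UNIV. dlt s s0 * \<pi> [] s0 a0 *
      expect p S (shift \<pi> s0 a0) (p s0 a0) n (\<lambda>ss as. exp (- \<beta> * ret r (Suc n) (s0#ss) (a0#as)) * X (last (s0#ss))))
      = (\<Sum>s0\<in>{1..Suc S}. if s0 = s then (\<Sum>a0\<in>UNIV. \<pi> [] s a0 *
      expect p S (shift \<pi> s a0) (p s a0) n (\<lambda>ss as. exp (- \<beta> * ret r (Suc n) (s#ss) (a0#as)) * X (last (s#ss)))) else 0)"
      by (intro sum.cong) (auto simp: dlt_def)
    then show ?thesis using s by simp
  qed
  also have "\<dots> = (\<Sum>a\<in>UNIV. \<pi> [] s a * (\<Sum>s1\<in>{1..Suc S}. W \<beta> s a s1 * Phi \<beta> X n (shift \<pi> s a) s1))"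
  proof (intro sum.cong refl arg_cong2[where f="(*)"])
    fix a
    have "expect p S (shift \<pi> s a) (p s a) n (\<lambda>ss as. exp (- \<beta> * ret r (Suc n) (s#ss) (a#as)) * X (last (s#ss)))
      = expect p S (shift \<pi> s a) (p s a) n (\<lambda>ss as. exp (- \<beta> * r s a (ss!0)) * (exp (- \<beta> * ret r n ss as) * X (last ss)))"
      by (intro expect_cong) (auto simp: ret_Suc mult_exp_exp algebra_simps dest: paths_nonempty)
    also have "\<dots> = (\<Sum>s1\<in>{1..Suc S}. W \<beta> s a s1 * Phi \<beta> X n (shift \<pi> s a) s1)"
      using expect_lin[of p S "shift \<pi> s a" "p s a" n "\<lambda>s1. exp (- \<beta> * r s a s1)" "\<lambda>ss as. exp (- \<beta> * ret r n ss as) * X (last ss)"]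
      by (simp add: Phi_def W_def)
    finally show "expect p S (shift \<pi> s a) (p s a) n (\<lambda>ss as. exp (- \<beta> * ret r (Suc n) (s#ss) (a#as)) * X (last (s#ss)))
      = (\<Sum>s1\<in>{1..Suc S}. W \<beta> s a s1 * Phi \<beta> X n (shift \<pi> s a) s1)" .
  qed
  finally show ?thesis .
qed

lemma shift_HR: "\<pi> \<in> HR_policies \<Longrightarrow> shift \<pi> s a \<in> HR_policies"
  unfolding HR_policies_def shift_def by auto

lemma HR_nn: "\<pi> \<in> HR_policies \<Longrightarrow> 0 \<le> \<pi> h s a"
  unfolding HR_policies_def by auto

lemma HR_sum: "\<pi> \<in> HR_policies \<Longrightarrow> (\<Sum>a\<in>UNIV. \<pi> h s a) = 1"
  unfolding HR_policies_def by auto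

lemma sd_HR: "sd_policy d \<in> HR_policies"
  unfolding HR_policies_def sd_policy_def by auto

lemma shift_sd: fixes d :: "nat \<Rightarrow> 'a" shows "shift (sd_policy d) s a = sd_policy d"
  unfolding shift_def sd_policy_def by auto

lemma sum_sd: fixes d :: "nat \<Rightarrow> 'a" shows "(\<Sum>a\<in>UNIV. sd_policy d h s a * f a) = f (d s)"
proof -
  have "(\<Sum>a\<in>UNIV. sd_policy d h s a * f a) = (\<Sum>a\<in>UNIV. if a = d s then f a else 0)"
    by (intro sum.cong) (auto simp: sd_policy_def)
  also have "\<dots> = f (d s)" by (subst sum.delta) auto
  finally show ?thesis .
qed

lemma Phi_Suc_sd: "s \<in> {1..Suc S} \<Longrightarrow>
  Phi \<beta> X (Suc n) (sd_policy d) s = (\<Sum>s1\<in>{1..Suc S}. W \<beta> s (d s) s1 * Phi \<beta> X n (sd_policy d) s1)"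
  by (simp add: Phi_Suc shift_sd sum_sd)

definition recf :: "real \<Rightarrow> (nat \<Rightarrow> 'a policy \<Rightarrow> nat \<Rightarrow> real) \<Rightarrow> bool" where
  "recf \<beta> V \<longleftrightarrow> (\<forall>n \<pi> s. \<pi> \<in> HR_policies \<longrightarrow> s \<in> {1..Suc S} \<longrightarrow>
      V (Suc n) \<pi> s = (\<Sum>a\<in>UNIV. \<pi> [] s a * (\<Sum>s1\<in>{1..Suc S}. W \<beta> s a s1 * V n (shift \<pi> s a) s1)))"

lemma recf_D: "recf \<beta> V \<Longrightarrow> \<pi> \<in> HR_policies \<Longrightarrow> s \<in> {1..Suc S} \<Longrightarrow>
      V (Suc n) \<pi> s = (\<Sum>a\<in>UNIV. \<pi> [] s a * (\<Sum>s1\<in>{1..Suc S}. W \<beta> s a s1 * V n (shift \<pi> s a) s1))"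
  unfolding recf_def by blast

lemma recf_Phi: "recf \<beta> (Phi \<beta> X)"
  unfolding recf_def using Phi_Suc by blast

lemma recf_shift: "recf \<beta> V \<Longrightarrow> recf \<beta> (\<lambda>n. V (n + j))"
  unfolding recf_def by simp

lemma recf_add: "recf \<beta> V1 \<Longrightarrow> recf \<beta> V2 \<Longrightarrow> recf \<beta> (\<lambda>n \<pi> s. V1 n \<pi> s + V2 n \<pi> s)"
  unfolding recf_def by (simp add: distrib_left sum.distrib)

lemma recf_scale: "recf \<beta> V \<Longrightarrow> recf \<beta> (\<lambda>n \<pi> s. c * V n \<pi> s)"
  unfolding recf_def by (simp add: sum_distrib_left algebra_simps)

lemma recf_diff: "recf \<beta> V1 \<Longrightarrow> recf \<beta> V2 \<Longrightarrow> recf \<beta> (\<lambda>n \<pi> s. V1 n \<pi> s - V2 n \<pi> s)"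
  unfolding recf_def by (simp add: right_diff_distrib sum_subtractf)

lemma recf_sum: "finite J \<Longrightarrow> (\<And>j. j \<in> J \<Longrightarrow> recf \<beta> (V j)) \<Longrightarrow> recf \<beta> (\<lambda>n \<pi> s. \<Sum>j\<in>J. V j n \<pi> s)"
  unfolding recf_def by (simp add: swap3)

lemma recf_zero: "recf \<beta> (\<lambda>n \<pi> s. 0)"
  unfolding recf_def by simp

lemma recf_prop:
  assumes "recf \<beta> V1" "recf \<beta> V2" "\<And>\<pi> s. \<pi> \<in> HR_policies \<Longrightarrow> s \<in> {1..Suc S} \<Longrightarrow> V1 0 \<pi> s \<le> V2 0 \<pi> s"
  shows "\<pi> \<in> HR_policies \<Longrightarrow> s \<in> {1..Suc S} \<Longrightarrow> V1 n \<pi> s \<le> V2 n \<pi> s"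
proof (induction n arbitrary: \<pi> s)
  case 0 then show ?case using assms(3) by simp
next
  case (Suc n)
  have "V1 (Suc n) \<pi> s = (\<Sum>a\<in>UNIV. \<pi> [] s a * (\<Sum>s1\<in>{1..Suc S}. W \<beta> s a s1 * V1 n (shift \<pi> s a) s1))"
    using recf_D[OF assms(1) Suc.prems] .
  also have "\<dots> \<le> (\<Sum>a\<in>UNIV. \<pi> [] s a * (\<Sum>s1\<in>{1..Suc S}. W \<beta> s a s1 * V2 n (shift \<pi> s a) s1))"
    using Suc.prems Suc.IH shift_HR
    by (intro sum_mono mult_left_mono) (auto simp: HR_nn W_nn Suc.IH shift_HR)
  also have "\<dots> = V2 (Suc n) \<pi> s"
    using recf_D[OF assms(2) Suc.prems] by simp
  finally show ?case .
qed

lemma recf_eq: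
  assumes "recf \<beta> V1" "recf \<beta> V2" "\<And>\<pi> s. \<pi> \<in> HR_policies \<Longrightarrow> s \<in> {1..Suc S} \<Longrightarrow> V1 0 \<pi> s = V2 0 \<pi> s"
  shows "\<pi> \<in> HR_policies \<Longrightarrow> s \<in> {1..Suc S} \<Longrightarrow> V1 n \<pi> s = V2 n \<pi> s"
  using recf_prop[OF assms(1,2)] recf_prop[OF assms(2,1)] assms(3)
  by (metis order_antisym order_refl)

lemma recf_one0: "recf 0 (\<lambda>n \<pi> s. 1)"
proof (unfold recf_def W0, intro allI impI)
  fix n and \<pi> :: "'a policy" and s assume "\<pi> \<in> HR_policies" "s \<in> {1..Suc S}"
  then show "1 = (\<Sum>a\<in>UNIV. \<pi> [] s a * (\<Sum>s1\<in>{1..Suc S}. p s a s1 * 1))"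
    using p_sum1 HR_sum by simp
qed

definition indT :: "nat \<Rightarrow> real" where "indT x = (if x \<in> {1..S} then 1 else 0)"
definition inde :: "nat \<Rightarrow> real" where "inde x = (if x = Suc S then 1 else 0)"

lemma Phi_split: "Phi \<beta> (\<lambda>_. 1) n \<pi> s = Phi \<beta> indT n \<pi> s + Phi \<beta> inde n \<pi> s"
proof -
  have "Phi \<beta> (\<lambda>_. 1) n \<pi> s = expect p S \<pi> (dlt s) n (\<lambda>ss as. exp (- \<beta> * ret r n ss as) * indT (last ss) + exp (- \<beta> * ret r n ss as) * inde (last ss))"
    unfolding Phi_def
    by (intro expect_cong) (auto simp: indT_def inde_def dest!: paths_last)
  then show ?thesis unfolding Phi_def expect_add by simp
qed

lemma Phi_nn: assumes "\<pi> \<in> HR_policies" "s \<in> {1..Suc S}" "\<And>x. 0 \<le> X x" shows "0 \<le> Phi \<beta> X n \<pi> s"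
proof -
  have "(\<lambda>n \<pi> s. 0::real) n \<pi> s \<le> Phi \<beta> X n \<pi> s"
    by (rule recf_prop[OF recf_zero recf_Phi]) (use assms Phi_0 in auto)
  then show ?thesis by simp
qed

lemma prob_one: assumes "\<pi> \<in> HR_policies" "s \<in> {1..Suc S}" shows "Phi 0 (\<lambda>_. 1) n \<pi> s = 1"
proof -
  have "Phi 0 (\<lambda>_. 1) n \<pi> s = (\<lambda>n \<pi> s. 1::real) n \<pi> s"
    by (rule recf_eq[OF recf_Phi recf_one0]) (use assms Phi_0 in auto)
  then show ?thesis by simp
qed

end

context mdp begin

lemma closed_contra:
  fixes d :: "nat \<Rightarrow> 'a"
  assumes U: "U \<subseteq> {1..S}" "U \<noteq> {}" and cl: "\<forall>s\<in>U. \<forall>s1\<in>{1..Suc S}. 0 < p s (d s) s1 \<longrightarrow> s1 \<in> U"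
  shows False
proof -
  define indU where "indU x = (if x \<in> U then 1 else 0::real)" for x
  have fin: "finite U" using U(1) finite_subset by blast
  have lb: "s \<in> {1..Suc S} \<Longrightarrow> indU s \<le> Phi 0 indU n (sd_policy d) s" for n s
  proof (induction n arbitrary: s)
    case 0 then show ?case by (simp add: Phi_0)
  next
    case (Suc n)
    show ?case
    proof (cases "s \<in> U")
      case True
      have "indU s = (\<Sum>s1\<in>{1..Suc S}. p s (d s) s1)" using p_sum1 Suc.prems True by (simp add: indU_def)
      also have "\<dots> = (\<Sum>s1\<in>{1..Suc S}. p s (d s) s1 * indU s1)"
      proof (intro sum.cong refl)
        fix s1 assume s1: "s1 \<in> {1..Suc S}"
        show "p s (d s) s1 = p s (d s) s1 * indU s1"
        proof (cases "0 < p s (d s) s1")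
          case True then show ?thesis using cl \<open>s \<in> U\<close> s1 by (simp add: indU_def)
        next
          case False then have "p s (d s) s1 = 0" using p_nn[OF Suc.prems s1, where a="d s"] by simp
          then show ?thesis by simp
        qed
      qed
      also have "\<dots> \<le> (\<Sum>s1\<in>{1..Suc S}. W 0 s (d s) s1 * Phi 0 indU n (sd_policy d) s1)"
        using Suc.IH p_nn[OF Suc.prems] by (intro sum_mono) (auto simp: W0 intro!: mult_left_mono)
      also have "\<dots> = Phi 0 indU (Suc n) (sd_policy d) s" using Phi_Suc_sd[OF Suc.prems] by simp
      finally show ?thesis .
    next
      case False
      then show ?thesis using Phi_nn[OF sd_HR Suc.prems] by (simp add: indU_def)
    qed
  qed
  obtain s0 where s0: "s0 \<in> U" using U(2) by blast
  have s0St: "s0 \<in> {1..Suc S}" using s0 U(1) by auto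
  have eq: "Phi 0 indU n (sd_policy d) s0 = (\<Sum>s'\<in>U. expect p S (sd_policy d) (\<lambda>x. if x = s0 then 1 else 0) n
                        (\<lambda>ss as. if last ss = s' then 1 else 0))" for n
  proof -
    have "Phi 0 indU n (sd_policy d) s0 = expect p S (sd_policy d) (\<lambda>x. if x = s0 then 1 else 0) n
                        (\<lambda>ss as. \<Sum>s'\<in>U. if last ss = s' then 1 else 0)"
      unfolding Phi_def dlt_def indU_def using fin by (intro expect_cong) simp
    then show ?thesis by (simp add: expect_sum[OF fin])
  qed
  have "(\<lambda>n. \<Sum>s'\<in>U. expect p S (sd_policy d) (\<lambda>x. if x = s0 then 1 else 0) n
                        (\<lambda>ss as. if last ss = s' then 1 else 0)) \<longlonglongrightarrow> (\<Sum>s'\<in>U. 0)"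
  proof (intro tendsto_sum summable_LIMSEQ_zero)
    fix s' assume "s' \<in> U"
    then show "summable (\<lambda>n. expect p S (sd_policy d) (\<lambda>x. if x = s0 then 1 else 0) n
                        (\<lambda>ss as. if last ss = s' then 1 else 0))"
      using trans s0 U(1) unfolding transient_def by blast
  qed
  moreover have "\<forall>n. 1 \<le> (\<Sum>s'\<in>U. expect p S (sd_policy d) (\<lambda>x. if x = s0 then 1 else 0) n
                        (\<lambda>ss as. if last ss = s' then 1 else 0))"
    using lb[OF s0St] s0 eq by (simp add: indU_def)
  ultimately have "1 \<le> (\<Sum>s'\<in>U. (0::real))" by (intro LIMSEQ_le_const) auto
  then show False by simp
qed

end

context mdp begin

lemma Phi_e_mono1: assumes "\<pi> \<in> HR_policies" "s \<in> {1..Suc S}"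
  shows "Phi \<beta> inde n \<pi> s \<le> Phi \<beta> inde (Suc n) \<pi> s"
proof -
  have "Phi \<beta> inde n \<pi> s \<le> (\<lambda>n. Phi \<beta> inde (n+1)) n \<pi> s"
  proof (rule recf_prop[OF recf_Phi recf_shift[OF recf_Phi]])
    fix \<pi> :: "'a policy" and s assume \<pi>: "\<pi> \<in> HR_policies" and s: "s \<in> {1..Suc S}"
    show "Phi \<beta> inde 0 \<pi> s \<le> Phi \<beta> inde (0+1) \<pi> s"
    proof (cases "s = Suc S")
      case True
      have "Phi \<beta> inde (0+1) \<pi> s = (\<Sum>a\<in>UNIV. \<pi> [] s a * (\<Sum>s1\<in>{1..Suc S}. W \<beta> s a s1 * Phi \<beta> inde 0 (shift \<pi> s a) s1))"
        using Phi_Suc[OF s] by simp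
      also have "\<dots> = (\<Sum>a\<in>UNIV. \<pi> [] s a * 1)"
        using True by (simp only: sum_W_sink) (simp add: Phi_0 inde_def)
      also have "\<dots> = 1" using HR_sum[OF \<pi>] by simp
      finally show ?thesis using True Phi_0[OF s] by (simp add: inde_def)
    next
      case False
      then show ?thesis using Phi_0[OF s] Phi_nn[OF \<pi> s, of inde] by (simp add: inde_def)
    qed
  qed (use assms in auto)
  then show ?thesis by simp
qed

lemma Phi_e_mono: assumes "\<pi> \<in> HR_policies" "s \<in> {1..Suc S}" "n \<le> m"
  shows "Phi \<beta> inde n \<pi> s \<le> Phi \<beta> inde m \<pi> s"
  using lift_Suc_mono_le[of "\<lambda>n. Phi \<beta> inde n \<pi> s", OF Phi_e_mono1[OF assms(1,2)] assms(3)] .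

lemma Phi_e_sink: assumes "\<pi> \<in> HR_policies" shows "1 \<le> Phi \<beta> inde n \<pi> (Suc S)"
  using Phi_e_mono[OF assms, of "Suc S" 0 n] Phi_0[of "Suc S"] by (simp add: inde_def)

fun G :: "nat \<Rightarrow> nat set" where
  "G 0 = {Suc S}"
| "G (Suc k) = G k \<union> {s\<in>{1..Suc S}. \<forall>a. \<exists>s1\<in>G k. 0 < p s a s1}"

lemma G_sub: "G k \<subseteq> {1..Suc S}"
  by (induction k) auto

lemma G_mono: "k \<le> m \<Longrightarrow> G k \<subseteq> G m"
  by (induction m) (auto simp: le_Suc_eq)

definition cw :: "real \<Rightarrow> real" where
  "cw \<beta> = Min (insert 1 {W \<beta> s a s1 | s a s1. s \<in> {1..Suc S} \<and> s1 \<in> {1..Suc S} \<and> 0 < p s a s1})"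

lemma cw_fin: "finite {W \<beta> s a s1 | s a s1. s \<in> {1..Suc S} \<and> s1 \<in> {1..Suc S} \<and> 0 < p s a s1}"
proof -
  have "{W \<beta> s a s1 | s a s1. s \<in> {1..Suc S} \<and> s1 \<in> {1..Suc S} \<and> 0 < p s a s1}
     \<subseteq> (\<lambda>(s,a,s1). W \<beta> s a s1) ` ({1..Suc S} \<times> UNIV \<times> {1..Suc S})" by force
  then show ?thesis by (rule finite_subset) auto
qed

lemma cw_pos: "0 < cw \<beta>"
  unfolding cw_def using cw_fin by (subst Min_gr_iff) (auto simp: W_def)

lemma cw_le1: "cw \<beta> \<le> 1"
  unfolding cw_def using cw_fin by (intro Min_le) auto

lemma cw_le: "s \<in> {1..Suc S} \<Longrightarrow> s1 \<in> {1..Suc S} \<Longrightarrow> 0 < p s a s1 \<Longrightarrow> cw \<beta> \<le> W \<beta> s a s1"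
  unfolding cw_def using cw_fin by (intro Min_le) auto

lemma layer_bound: "s \<in> G k \<Longrightarrow> \<pi> \<in> HR_policies \<Longrightarrow> cw \<beta> ^ k \<le> Phi \<beta> inde k \<pi> s"
proof (induction k arbitrary: s \<pi>)
  case 0 then show ?case by (simp add: Phi_0 inde_def)
next
  case (Suc k)
  have c0: "0 < cw \<beta>" "cw \<beta> \<le> 1" using cw_pos cw_le1 by auto
  show ?case
  proof (cases "s \<in> G k")
    case True
    have sSt: "s \<in> {1..Suc S}" using True G_sub[of k] by blast
    have "cw \<beta> ^ Suc k \<le> cw \<beta> ^ k" using c0 by (simp add: mult_left_le_one_le)
    also have "\<dots> \<le> Phi \<beta> inde k \<pi> s" using Suc.IH[OF True Suc.prems(2)] .
    also have "\<dots> \<le> Phi \<beta> inde (Suc k) \<pi> s" using Phi_e_mono1[OF Suc.prems(2) sSt] .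
    finally show ?thesis .
  next
    case False
    then have sSt: "s \<in> {1..Suc S}" and ex: "\<forall>a. \<exists>s1\<in>G k. 0 < p s a s1" using Suc.prems by auto
    have "(\<Sum>a\<in>UNIV. \<pi> [] s a * cw \<beta> ^ Suc k) \<le> (\<Sum>a\<in>UNIV. \<pi> [] s a * (\<Sum>s1\<in>{1..Suc S}. W \<beta> s a s1 * Phi \<beta> inde k (shift \<pi> s a) s1))"
    proof (intro sum_mono mult_left_mono HR_nn[OF Suc.prems(2)])
      fix a
      obtain s1 where s1: "s1 \<in> G k" "0 < p s a s1" using ex by blast
      have s1St: "s1 \<in> {1..Suc S}" using s1 G_sub[of k] by blast
      have "cw \<beta> ^ Suc k = cw \<beta> * cw \<beta> ^ k" by simp
      also have "\<dots> \<le> W \<beta> s a s1 * Phi \<beta> inde k (shift \<pi> s a) s1"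
        using cw_le[OF sSt s1St s1(2)] Suc.IH[OF s1(1) shift_HR[OF Suc.prems(2)]] c0 W_nn[OF sSt s1St]
        by (intro mult_mono) auto
      also have "\<dots> \<le> (\<Sum>s1\<in>{1..Suc S}. W \<beta> s a s1 * Phi \<beta> inde k (shift \<pi> s a) s1)"
        using s1St W_nn[OF sSt] Phi_nn[OF shift_HR[OF Suc.prems(2)], of _ inde]
        by (intro member_le_sum) (auto simp: inde_def)
      finally show "cw \<beta> ^ Suc k \<le> (\<Sum>s1\<in>{1..Suc S}. W \<beta> s a s1 * Phi \<beta> inde k (shift \<pi> s a) s1)" .
    qed
    then show ?thesis using Phi_Suc[OF sSt] HR_sum[OF Suc.prems(2)] by (simp add: sum_distrib_right[symmetric])
  qed
qed

lemma G_cover: "\<exists>K. {1..Suc S} \<subseteq> G K"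
proof -
  have "(\<Union>k. G k) \<subseteq> {1..Suc S}" using G_sub by blast
  then have fin: "finite (\<Union>k. G k)" using finite_subset by blast
  have "finite F \<Longrightarrow> F \<subseteq> (\<Union>k. G k) \<Longrightarrow> \<exists>K. F \<subseteq> G K" for F
  proof (induction F rule: finite_induct)
    case empty then show ?case by auto
  next
    case (insert x F)
    then obtain K1 where K1: "F \<subseteq> G K1" by auto
    obtain k where k: "x \<in> G k" using insert.prems by auto
    have "G K1 \<subseteq> G (max K1 k)" "G k \<subseteq> G (max K1 k)" by (simp_all add: G_mono)
    then have "insert x F \<subseteq> G (max K1 k)" using K1 k by blast
    then show ?case by blast
  qed
  from this[OF fin] obtain K where K: "(\<Union>k. G k) \<subseteq> G K" by blast
  define U where "U = {1..Suc S} - G K"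
  have "U = {}"
  proof (rule ccontr)
    assume ne: "U \<noteq> {}"
    have nxt: "\<exists>a. \<forall>s1\<in>G K. \<not> 0 < p s a s1" if sU: "s \<in> U" for s
    proof (rule ccontr)
      assume "\<not> (\<exists>a. \<forall>s1\<in>G K. \<not> 0 < p s a s1)"
      then have "\<forall>a. \<exists>s1\<in>G K. 0 < p s a s1" by blast
      moreover have "s \<in> {1..Suc S}" using sU unfolding U_def by blast
      ultimately have "s \<in> G (Suc K)" by simp
      then have "s \<in> G K" using K by blast
      then show False using sU unfolding U_def by blast
    qed
    define d where "d s = (SOME a. \<forall>s1\<in>G K. \<not> 0 < p s a s1)" for s
    have dprop: "\<forall>s1\<in>G K. \<not> 0 < p s (d s) s1" if "s \<in> U" for s
      unfolding d_def using someI_ex[OF nxt[OF that]] .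
    have "Suc S \<in> G K" using G_mono[of 0 K] by auto
    have Usub: "U \<subseteq> {1..S}"
    proof
      fix x assume "x \<in> U"
      then have "x \<noteq> Suc S" "x \<in> {1..Suc S}" using \<open>Suc S \<in> G K\<close> unfolding U_def by auto
      then show "x \<in> {1..S}" by (auto simp: le_Suc_eq)
    qed
    have cl: "\<forall>s\<in>U. \<forall>s1\<in>{1..Suc S}. 0 < p s (d s) s1 \<longrightarrow> s1 \<in> U"
    proof (intro ballI impI)
      fix s s1 assume "s \<in> U" "s1 \<in> {1..Suc S}" "0 < p s (d s) s1"
      then show "s1 \<in> U" using dprop[OF \<open>s \<in> U\<close>] unfolding U_def by blast
    qed
    show False by (rule closed_contra[OF Usub ne cl])
  qed
  then show ?thesis unfolding U_def by blast
qed

lemma absorb: "\<exists>K c. 0 < K \<and> 0 < c \<and> c \<le> 1 \<and> (\<forall>\<pi>\<in>HR_policies. \<forall>s\<in>{1..Suc S}. c \<le> Phi \<beta> inde K \<pi> s)"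
proof -
  obtain K where K: "{1..Suc S} \<subseteq> G K" using G_cover by blast
  have "\<forall>\<pi>\<in>HR_policies. \<forall>s\<in>{1..Suc S}. cw \<beta> ^ K \<le> Phi \<beta> inde (Suc K) \<pi> s"
  proof (intro ballI)
    fix \<pi> :: "'a policy" and s assume "\<pi> \<in> HR_policies" "s \<in> {1..Suc S}"
    then show "cw \<beta> ^ K \<le> Phi \<beta> inde (Suc K) \<pi> s"
      using layer_bound[of s K \<pi> \<beta>] K Phi_e_mono1[of \<pi> s \<beta> K] by auto
  qed
  moreover have "0 < cw \<beta> ^ K" using cw_pos by simp
  moreover have "cw \<beta> ^ K \<le> 1" using cw_pos[of \<beta>] cw_le1[of \<beta>] by (intro power_le_one) auto
  ultimately show ?thesis by (intro exI[of _ "Suc K"] exI[of _ "cw \<beta> ^ K"]) auto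
qed

lemma BC:
  assumes c: "0 < c" and K: "\<forall>\<pi>\<in>HR_policies. \<forall>s\<in>{1..Suc S}. c \<le> Phi \<beta> inde K \<pi> s"
    and \<pi>: "\<pi> \<in> HR_policies" and s: "s \<in> {1..Suc S}"
  shows "Phi \<beta> indT n \<pi> s \<le> (1/c) * (Phi \<beta> inde (n+K) \<pi> s - Phi \<beta> inde n \<pi> s)"
proof -
  have "Phi \<beta> indT n \<pi> s \<le> (\<lambda>n \<pi> s. (1/c) * ((\<lambda>n. Phi \<beta> inde (n+K)) n \<pi> s - Phi \<beta> inde n \<pi> s)) n \<pi> s"
  proof (rule recf_prop[OF recf_Phi recf_scale[OF recf_diff[OF recf_shift[OF recf_Phi] recf_Phi]]])
    fix \<pi> :: "'a policy" and s assume \<pi>: "\<pi> \<in> HR_policies" and s: "s \<in> {1..Suc S}"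
    show "Phi \<beta> indT 0 \<pi> s \<le> (1/c) * ((\<lambda>n. Phi \<beta> inde (n+K)) 0 \<pi> s - Phi \<beta> inde 0 \<pi> s)"
    proof (cases "s = Suc S")
      case True
      then show ?thesis using Phi_e_sink[OF \<pi>, of \<beta> K] c by (simp add: Phi_0 indT_def inde_def)
    next
      case False
      then have "s \<in> {1..S}" using s by auto
      then show ?thesis using K \<pi> c by (simp add: Phi_0[OF s] indT_def inde_def)
    qed
  qed (use \<pi> s in auto)
  then show ?thesis by simp
qed

lemma decay:
  assumes c: "0 < c" and K: "\<forall>\<pi>\<in>HR_policies. \<forall>s\<in>{1..Suc S}. c \<le> Phi 0 inde K \<pi> s"
    and \<pi>: "\<pi> \<in> HR_policies" and s: "s \<in> {1..Suc S}"
  shows "Phi 0 indT (n+K) \<pi> s \<le> (1-c) * Phi 0 indT n \<pi> s"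
proof -
  have "(\<lambda>n. Phi 0 indT (n+K)) n \<pi> s \<le> (\<lambda>n \<pi> s. (1-c) * Phi 0 indT n \<pi> s) n \<pi> s"
  proof (rule recf_prop[OF recf_shift[OF recf_Phi] recf_scale[OF recf_Phi]])
    fix \<pi> :: "'a policy" and s assume \<pi>: "\<pi> \<in> HR_policies" and s: "s \<in> {1..Suc S}"
    have sp: "Phi 0 indT K \<pi> s = 1 - Phi 0 inde K \<pi> s"
      using Phi_split[of 0 K \<pi> s] prob_one[OF \<pi> s, of K] by simp
    show "(\<lambda>n. Phi 0 indT (n+K)) 0 \<pi> s \<le> (1-c) * Phi 0 indT 0 \<pi> s"
    proof (cases "s = Suc S")
      case True
      then show ?thesis using sp Phi_e_sink[OF \<pi>, of 0 K] by (simp add: Phi_0 indT_def)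
    next
      case False
      then have "s \<in> {1..S}" using s by auto
      then show ?thesis using sp K \<pi> s by (simp add: Phi_0[OF s] indT_def)
    qed
  qed (use \<pi> s in auto)
  then show ?thesis by simp
qed

end

lemma expect_const: "expect p S \<pi> \<nu> n (\<lambda>ss as. 0) = 0"
  unfolding expect_def by simp

context mdp begin

lemma expect_Suc_dlt: assumes "s \<in> {1..Suc S}"
  shows "expect p S \<pi> (dlt s) (Suc n) f = (\<Sum>a\<in>UNIV. \<pi> [] s a * expect p S (shift \<pi> s a) (p s a) n (\<lambda>ss as. f (s#ss) (a#as)))"
proof -
  have "expect p S \<pi> (dlt s) (Suc n) f = (\<Sum>s0\<in>{1..Suc S}. dlt s s0 * (\<Sum>a0\<in>UNIV. \<pi> [] s0 a0 *
      expect p S (shift \<pi> s0 a0) (p s0 a0) n (\<lambda>ss as. f (s0#ss) (a0#as))))"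
    unfolding expect_Suc by (simp add: sum_distrib_left mult.assoc)
  also have "\<dots> = (\<Sum>a\<in>UNIV. \<pi> [] s a * expect p S (shift \<pi> s a) (p s a) n (\<lambda>ss as. f (s#ss) (a#as)))"
    using assms by (rule sum_dlt) simp
  finally show ?thesis .
qed


lemma Phi_le1: assumes "\<pi> \<in> HR_policies" "s \<in> {1..Suc S}" shows "Phi 0 indT n \<pi> s \<le> 1"
proof -
  have "0 \<le> Phi 0 inde n \<pi> s" by (rule Phi_nn[OF assms]) (simp add: inde_def)
  then show ?thesis using Phi_split[of 0 n \<pi> s] prob_one[OF assms, of n] by simp
qed

lemma geo: "\<exists>C \<rho>. 0 < C \<and> 0 < \<rho> \<and> \<rho> < 1 \<and> (\<forall>\<pi>\<in>HR_policies. \<forall>s\<in>{1..Suc S}. \<forall>n. Phi 0 indT n \<pi> s \<le> C * \<rho> ^ n)"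
proof -
  obtain K c where Kc: "0 < K" "0 < c" "c \<le> 1" "\<forall>\<pi>\<in>HR_policies. \<forall>s\<in>{1..Suc S}. c \<le> Phi 0 inde K \<pi> s"
    using absorb[of 0] by blast
  define q where "q = max (1 - c) (1/2)"
  have q: "0 < q" "q < 1" "1 - c \<le> q" using Kc unfolding q_def by auto
  have dec: "Phi 0 indT (n+K) \<pi> s \<le> q * Phi 0 indT n \<pi> s" if "\<pi> \<in> HR_policies" "s \<in> {1..Suc S}" for n \<pi> s
  proof -
    have "Phi 0 indT (n+K) \<pi> s \<le> (1-c) * Phi 0 indT n \<pi> s" using decay[OF Kc(2) Kc(4) that] .
    also have "\<dots> \<le> q * Phi 0 indT n \<pi> s" using q Phi_nn[OF that, of indT] by (intro mult_right_mono) (auto simp: indT_def)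
    finally show ?thesis .
  qed
  have pw: "Phi 0 indT n \<pi> s \<le> q ^ (n div K)" if "\<pi> \<in> HR_policies" "s \<in> {1..Suc S}" for n \<pi> s
  proof (induction n rule: less_induct)
    case (less n)
    show ?case
    proof (cases "n < K")
      case True then show ?thesis using Phi_le1[OF that] by simp
    next
      case False
      then have n: "n = (n - K) + K" by simp
      have "Phi 0 indT n \<pi> s = Phi 0 indT ((n - K) + K) \<pi> s" using n by simp
      also have "\<dots> \<le> q * Phi 0 indT (n - K) \<pi> s" using dec[OF that] .
      also have "\<dots> \<le> q * q ^ ((n - K) div K)" using less.IH[of "n - K"] Kc(1) False q(1)
        by (intro mult_left_mono) auto
      also have "\<dots> = q ^ (n div K)" using le_div_geq[OF Kc(1)] False by simp
      finally show ?thesis .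
    qed
  qed
  define \<rho> where "\<rho> = q powr (1 / real K)"
  have \<rho>: "0 < \<rho>" "\<rho> < 1" unfolding \<rho>_def using q Kc(1)
    by (auto simp: powr01_less_one)
  have qr: "q ^ (n div K) \<le> (1/q) * \<rho> ^ n" for n
  proof -
    have "q ^ (n div K) = q powr real (n div K)" using q by (simp add: powr_realpow)
    also have "\<dots> \<le> q powr (real n / real K - 1)"
    proof (rule powr_mono')
      have "real n / real K - 1 \<le> real (n div K)"
      proof -
        have "real n = real (n div K) * real K + real (n mod K)"
          by (metis div_mult_mod_eq of_nat_add of_nat_mult)
        moreover have "real (n mod K) < real K" using Kc(1) by simp
        ultimately have "real n < (real (n div K) + 1) * real K" by (simp add: algebra_simps)
        then have "real n / real K < real (n div K) + 1" using Kc(1) by (simp add: field_simps)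
        then show ?thesis by simp
      qed
      then show "real n / real K - 1 \<le> real (n div K)" .
    qed (use q in auto)
    also have "\<dots> = q powr (real n / real K) / q" using q by (simp add: powr_diff)
    also have "q powr (real n / real K) = \<rho> ^ n"
      unfolding \<rho>_def using q by (simp add: powr_powr powr_realpow[symmetric] del: powr_realpow)
    finally show ?thesis by simp
  qed
  have "\<forall>\<pi>\<in>HR_policies. \<forall>s\<in>{1..Suc S}. \<forall>n. Phi 0 indT n \<pi> s \<le> (1/q) * \<rho> ^ n"
    using pw qr order_trans by blast
  then show ?thesis using q \<rho> by (intro exI[of _ "1/q"] exI[of _ \<rho>]) auto
qed


definition psi :: "nat \<Rightarrow> 'a policy \<Rightarrow> nat \<Rightarrow> real" where
  "psi n \<pi> s = expect p S \<pi> (dlt s) n (ret r n)"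

definition cc :: "'a policy \<Rightarrow> nat \<Rightarrow> real" where
  "cc \<pi> s = (\<Sum>a\<in>UNIV. \<pi> [] s a * (\<Sum>s1\<in>{1..Suc S}. p s a s1 * r s a s1))"

definition Rb :: real where
  "Rb = (\<Sum>s\<in>{1..Suc S}. \<Sum>a\<in>UNIV. \<Sum>s1\<in>{1..Suc S}. \<bar>r s a s1\<bar>)"

lemma r_le: assumes "s \<in> {1..Suc S}" "s1 \<in> {1..Suc S}" shows "\<bar>r s a s1\<bar> \<le> Rb"
proof -
  have "\<bar>r s a s1\<bar> \<le> (\<Sum>s1\<in>{1..Suc S}. \<bar>r s a s1\<bar>)"
    using assms(2) by (intro member_le_sum) auto
  also have "\<dots> \<le> (\<Sum>a\<in>UNIV. \<Sum>s1\<in>{1..Suc S}. \<bar>r s a s1\<bar>)"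
    by (intro member_le_sum) (auto intro: sum_nonneg)
  also have "\<dots> \<le> Rb" unfolding Rb_def
    using assms(1) by (intro member_le_sum) (auto intro!: sum_nonneg)
  finally show ?thesis .
qed

lemma Rb_nn: "0 \<le> Rb" unfolding Rb_def by (auto intro!: sum_nonneg)

lemma psi_0: "psi 0 \<pi> s = 0"
  unfolding psi_def ret_0 by (simp add: expect_const)

lemma expect_one: assumes "\<pi> \<in> HR_policies" "s \<in> {1..Suc S}"
  shows "expect p S \<pi> (dlt s) n (\<lambda>ss as. 1) = 1"
  using prob_one[OF assms, of n] unfolding Phi_def by simp

lemma psi_Suc: assumes \<pi>: "\<pi> \<in> HR_policies" and s: "s \<in> {1..Suc S}"
  shows "psi (Suc n) \<pi> s = cc \<pi> s + (\<Sum>a\<in>UNIV. \<pi> [] s a * (\<Sum>s1\<in>{1..Suc S}. W 0 s a s1 * psi n (shift \<pi> s a) s1))"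
proof -
  have inner: "expect p S (shift \<pi> s a) (p s a) n (\<lambda>ss as. ret r (Suc n) (s#ss) (a#as))
     = (\<Sum>s1\<in>{1..Suc S}. p s a s1 * r s a s1) + (\<Sum>s1\<in>{1..Suc S}. W 0 s a s1 * psi n (shift \<pi> s a) s1)" for a
  proof -
    have "expect p S (shift \<pi> s a) (p s a) n (\<lambda>ss as. ret r (Suc n) (s#ss) (a#as))
       = expect p S (shift \<pi> s a) (p s a) n (\<lambda>ss as. r s a (ss!0) * 1 + 1 * ret r n ss as)"
      by (intro expect_cong) (simp add: ret_Suc)
    also have "\<dots> = expect p S (shift \<pi> s a) (p s a) n (\<lambda>ss as. r s a (ss!0) * 1)
        + expect p S (shift \<pi> s a) (p s a) n (\<lambda>ss as. 1 * ret r n ss as)"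
      by (rule expect_add)
    also have "expect p S (shift \<pi> s a) (p s a) n (\<lambda>ss as. r s a (ss!0) * 1)
        = (\<Sum>s1\<in>{1..Suc S}. p s a s1 * r s a s1 * expect p S (shift \<pi> s a) (dlt s1) n (\<lambda>ss as. 1))"
      by (rule expect_lin)
    also have "\<dots> = (\<Sum>s1\<in>{1..Suc S}. p s a s1 * r s a s1)"
      using expect_one[OF shift_HR[OF \<pi>]] by simp
    also have "expect p S (shift \<pi> s a) (p s a) n (\<lambda>ss as. 1 * ret r n ss as)
        = (\<Sum>s1\<in>{1..Suc S}. p s a s1 * 1 * expect p S (shift \<pi> s a) (dlt s1) n (ret r n))"
      by (rule expect_lin[where g="\<lambda>_. 1"])
    also have "\<dots> = (\<Sum>s1\<in>{1..Suc S}. W 0 s a s1 * psi n (shift \<pi> s a) s1)"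
      by (simp add: W0 psi_def)
    finally show ?thesis .
  qed
  have "psi (Suc n) \<pi> s = (\<Sum>a\<in>UNIV. \<pi> [] s a * expect p S (shift \<pi> s a) (p s a) n (\<lambda>ss as. ret r (Suc n) (s#ss) (a#as)))"
    unfolding psi_def by (rule expect_Suc_dlt[OF s])
  also have "\<dots> = cc \<pi> s + (\<Sum>a\<in>UNIV. \<pi> [] s a * (\<Sum>s1\<in>{1..Suc S}. W 0 s a s1 * psi n (shift \<pi> s a) s1))"
    unfolding inner cc_def by (simp add: distrib_left sum.distrib)
  finally show ?thesis .
qed

lemma cc_bound: assumes \<pi>: "\<pi> \<in> HR_policies" and s: "s \<in> {1..Suc S}"
  shows "\<bar>cc \<pi> s\<bar> \<le> Rb * indT s"
proof (cases "s = Suc S")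
  case True
  have "cc \<pi> s = (\<Sum>a\<in>UNIV. \<pi> [] s a * (\<Sum>s1\<in>{1..Suc S}. W 0 (Suc S) a s1 * r (Suc S) a s1))"
    unfolding cc_def W0 True ..
  also have "\<dots> = 0" by (simp only: sum_W_sink) (simp add: sink_r)
  finally show ?thesis using Rb_nn True by (simp add: indT_def)
next
  case False
  then have sT: "s \<in> {1..S}" using s by auto
  have "\<bar>cc \<pi> s\<bar> \<le> (\<Sum>a\<in>UNIV. \<bar>\<pi> [] s a * (\<Sum>s1\<in>{1..Suc S}. p s a s1 * r s a s1)\<bar>)"
    unfolding cc_def by (rule sum_abs)
  also have "\<dots> \<le> (\<Sum>a\<in>UNIV. \<pi> [] s a * Rb)"
  proof (intro sum_mono)
    fix a
    have "\<bar>\<Sum>s1\<in>{1..Suc S}. p s a s1 * r s a s1\<bar> \<le> (\<Sum>s1\<in>{1..Suc S}. \<bar>p s a s1 * r s a s1\<bar>)"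
      by (rule sum_abs)
    also have "\<dots> \<le> (\<Sum>s1\<in>{1..Suc S}. p s a s1 * Rb)"
      using p_nn[OF s] r_le[OF s] by (intro sum_mono) (auto simp: abs_mult intro!: mult_left_mono)
    also have "\<dots> = Rb" using p_sum1[OF s] by (simp add: sum_distrib_right[symmetric])
    finally show "\<bar>\<pi> [] s a * (\<Sum>s1\<in>{1..Suc S}. p s a s1 * r s a s1)\<bar> \<le> \<pi> [] s a * Rb"
      using HR_nn[OF \<pi>] by (simp add: abs_mult mult_left_mono)
  qed
  also have "\<dots> = Rb" using HR_sum[OF \<pi>] by (simp add: sum_distrib_right[symmetric])
  finally show ?thesis using sT by (simp add: indT_def)
qed

lemma psi_bound: "\<pi> \<in> HR_policies \<Longrightarrow> s \<in> {1..Suc S} \<Longrightarrow> \<bar>psi m \<pi> s\<bar> \<le> Rb * (\<Sum>j<m. Phi 0 indT j \<pi> s)"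
proof (induction m arbitrary: \<pi> s)
  case 0 then show ?case by (simp add: psi_0)
next
  case (Suc m)
  have "\<bar>psi (Suc m) \<pi> s\<bar> \<le> \<bar>cc \<pi> s\<bar> + \<bar>\<Sum>a\<in>UNIV. \<pi> [] s a * (\<Sum>s1\<in>{1..Suc S}. W 0 s a s1 * psi m (shift \<pi> s a) s1)\<bar>"
    unfolding psi_Suc[OF Suc.prems] by (rule abs_triangle_ineq)
  also have "\<bar>\<Sum>a\<in>UNIV. \<pi> [] s a * (\<Sum>s1\<in>{1..Suc S}. W 0 s a s1 * psi m (shift \<pi> s a) s1)\<bar>
      \<le> (\<Sum>a\<in>UNIV. \<pi> [] s a * (\<Sum>s1\<in>{1..Suc S}. W 0 s a s1 * (Rb * (\<Sum>j<m. Phi 0 indT j (shift \<pi> s a) s1))))"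
  proof -
    have "\<bar>\<Sum>a\<in>UNIV. \<pi> [] s a * (\<Sum>s1\<in>{1..Suc S}. W 0 s a s1 * psi m (shift \<pi> s a) s1)\<bar>
       \<le> (\<Sum>a\<in>UNIV. \<bar>\<pi> [] s a * (\<Sum>s1\<in>{1..Suc S}. W 0 s a s1 * psi m (shift \<pi> s a) s1)\<bar>)" by (rule sum_abs)
    also have "\<dots> \<le> (\<Sum>a\<in>UNIV. \<pi> [] s a * (\<Sum>s1\<in>{1..Suc S}. W 0 s a s1 * (Rb * (\<Sum>j<m. Phi 0 indT j (shift \<pi> s a) s1))))"
    proof (intro sum_mono)
      fix a
      have "\<bar>\<Sum>s1\<in>{1..Suc S}. W 0 s a s1 * psi m (shift \<pi> s a) s1\<bar> \<le> (\<Sum>s1\<in>{1..Suc S}. \<bar>W 0 s a s1 * psi m (shift \<pi> s a) s1\<bar>)"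
        by (rule sum_abs)
      also have "\<dots> \<le> (\<Sum>s1\<in>{1..Suc S}. W 0 s a s1 * (Rb * (\<Sum>j<m. Phi 0 indT j (shift \<pi> s a) s1)))"
        using W_nn[OF Suc.prems(2)] Suc.IH[OF shift_HR[OF Suc.prems(1)]]
        by (intro sum_mono) (auto simp: abs_mult intro!: mult_left_mono)
      finally show "\<bar>\<pi> [] s a * (\<Sum>s1\<in>{1..Suc S}. W 0 s a s1 * psi m (shift \<pi> s a) s1)\<bar>
        \<le> \<pi> [] s a * (\<Sum>s1\<in>{1..Suc S}. W 0 s a s1 * (Rb * (\<Sum>j<m. Phi 0 indT j (shift \<pi> s a) s1)))"
        using HR_nn[OF Suc.prems(1)] by (simp add: abs_mult mult_left_mono)
    qed
    finally show ?thesis .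
  qed
  also have "(\<Sum>a\<in>UNIV. \<pi> [] s a * (\<Sum>s1\<in>{1..Suc S}. W 0 s a s1 * (Rb * (\<Sum>j<m. Phi 0 indT j (shift \<pi> s a) s1))))
     = Rb * (\<Sum>j<m. Phi 0 indT (Suc j) \<pi> s)"
  proof -
    have "(\<Sum>j<m. Phi 0 indT (Suc j) \<pi> s) = (\<Sum>j<m. \<Sum>a\<in>UNIV. \<pi> [] s a * (\<Sum>s1\<in>{1..Suc S}. W 0 s a s1 * Phi 0 indT j (shift \<pi> s a) s1))"
      using Phi_Suc[OF Suc.prems(2)] by simp
    also have "\<dots> = (\<Sum>a\<in>UNIV. \<pi> [] s a * (\<Sum>s1\<in>{1..Suc S}. W 0 s a s1 * (\<Sum>j<m. Phi 0 indT j (shift \<pi> s a) s1)))"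
      by (rule swap3)
    finally show ?thesis by (simp add: sum_distrib_left algebra_simps)
  qed
  finally have "\<bar>psi (Suc m) \<pi> s\<bar> \<le> Rb * indT s + Rb * (\<Sum>j<m. Phi 0 indT (Suc j) \<pi> s)"
    using cc_bound[OF Suc.prems] by simp
  also have "\<dots> = Rb * (\<Sum>j<Suc m. Phi 0 indT j \<pi> s)"
    by (simp add: sum.lessThan_Suc_shift Phi_0[OF Suc.prems(2)] distrib_left del: sum.lessThan_Suc)
  finally show ?case .
qed

lemma recf_psi_diff: "recf 0 (\<lambda>n \<pi> s. psi (n+m) \<pi> s - psi n \<pi> s)"
  unfolding recf_def using psi_Suc by (simp add: right_diff_distrib sum_subtractf)

lemma psi_cauchy: assumes "\<pi> \<in> HR_policies" "s \<in> {1..Suc S}"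
  shows "\<bar>psi (n+m) \<pi> s - psi n \<pi> s\<bar> \<le> Rb * (\<Sum>j<m. Phi 0 indT (n+j) \<pi> s)"
proof -
  have rV: "recf 0 (\<lambda>n \<pi> s. Rb * (\<Sum>j<m. (\<lambda>n. Phi 0 indT (n+j)) n \<pi> s))"
    by (intro recf_scale recf_sum recf_shift recf_Phi) simp
  have b0: "\<bar>psi (0+m) \<pi> s - psi 0 \<pi> s\<bar> \<le> Rb * (\<Sum>j<m. Phi 0 indT (0+j) \<pi> s)"
    if "\<pi> \<in> HR_policies" "s \<in> {1..Suc S}" for \<pi> s
    using psi_bound[OF that] by (simp add: psi_0)
  have "(\<lambda>n \<pi> s. psi (n+m) \<pi> s - psi n \<pi> s) n \<pi> s \<le> (\<lambda>n \<pi> s. Rb * (\<Sum>j<m. (\<lambda>n. Phi 0 indT (n+j)) n \<pi> s)) n \<pi> s"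
    by (rule recf_prop[OF recf_psi_diff rV]) (use b0 assms in \<open>auto simp: abs_le_iff\<close>)
  moreover have "(\<lambda>n \<pi> s. -1 * (psi (n+m) \<pi> s - psi n \<pi> s)) n \<pi> s \<le> (\<lambda>n \<pi> s. Rb * (\<Sum>j<m. (\<lambda>n. Phi 0 indT (n+j)) n \<pi> s)) n \<pi> s"
    by (rule recf_prop[OF recf_scale[OF recf_psi_diff] rV]) (use b0 assms in \<open>auto simp: abs_le_iff\<close>)
  ultimately show ?thesis by simp
qed

end

lemma jensen_exp:
  fixes w X :: "'i \<Rightarrow> real"
  assumes fin: "finite I" and w: "\<And>i. i \<in> I \<Longrightarrow> 0 \<le> w i" and s1: "(\<Sum>i\<in>I. w i) = 1"
  shows "exp (- \<beta> * (\<Sum>i\<in>I. w i * X i)) \<le> (\<Sum>i\<in>I. w i * exp (- \<beta> * X i))"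
proof -
  define m where "m = (\<Sum>i\<in>I. w i * X i)"
  have "(\<Sum>i\<in>I. w i * (exp (- \<beta> * m) * (1 + (- \<beta> * (X i - m))))) \<le> (\<Sum>i\<in>I. w i * exp (- \<beta> * X i))"
  proof (intro sum_mono mult_left_mono w)
    fix i
    have "exp (- \<beta> * m) * (1 + (- \<beta> * (X i - m))) \<le> exp (- \<beta> * m) * exp (- \<beta> * (X i - m))"
      by (intro mult_left_mono exp_ge_add_one_self) auto
    also have "\<dots> = exp (- \<beta> * X i)" by (simp add: mult_exp_exp algebra_simps)
    finally show "exp (- \<beta> * m) * (1 + (- \<beta> * (X i - m))) \<le> exp (- \<beta> * X i)" .
  qed
  moreover have "(\<Sum>i\<in>I. w i * (exp (- \<beta> * m) * (1 + (- \<beta> * (X i - m))))) = exp (- \<beta> * m)"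
  proof -
    have "(\<Sum>i\<in>I. w i * (exp (- \<beta> * m) * (1 + (- \<beta> * (X i - m)))))
      = exp (- \<beta> * m) * ((\<Sum>i\<in>I. w i) - \<beta> * ((\<Sum>i\<in>I. w i * X i) - m * (\<Sum>i\<in>I. w i)))"
      by (simp add: algebra_simps sum_distrib_left sum_distrib_right sum_subtractf sum.distrib)
    also have "\<dots> = exp (- \<beta> * m)" using s1 by (simp add: m_def)
    finally show ?thesis .
  qed
  ultimately show ?thesis unfolding m_def by simp
qed

lemma erm_le_mean:
  fixes w X :: "'i \<Rightarrow> real"
  assumes fin: "finite I" and w: "\<And>i. i \<in> I \<Longrightarrow> 0 \<le> w i" and s1: "(\<Sum>i\<in>I. w i) = 1" and b: "0 < \<beta>"
  shows "- (1/\<beta>) * ln (\<Sum>i\<in>I. w i * exp (- \<beta> * X i)) \<le> (\<Sum>i\<in>I. w i * X i)"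
proof -
  have j: "exp (- \<beta> * (\<Sum>i\<in>I. w i * X i)) \<le> (\<Sum>i\<in>I. w i * exp (- \<beta> * X i))"
    by (rule jensen_exp[OF fin w s1])
  have pos: "0 < (\<Sum>i\<in>I. w i * exp (- \<beta> * X i))" by (rule order_less_le_trans[OF exp_gt_zero j])
  have "- \<beta> * (\<Sum>i\<in>I. w i * X i) \<le> ln (\<Sum>i\<in>I. w i * exp (- \<beta> * X i))"
    using j pos by (subst ln_ge_iff) auto
  then show ?thesis using b by (simp add: field_simps)
qed

lemma erm_mono_sum:
  fixes w X :: "'i \<Rightarrow> real"
  assumes fin: "finite I" and w: "\<And>i. i \<in> I \<Longrightarrow> 0 \<le> w i" and s1: "(\<Sum>i\<in>I. w i) = 1"
    and b: "0 < \<beta>" "\<beta> \<le> \<beta>'"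
  shows "- (1/\<beta>') * ln (\<Sum>i\<in>I. w i * exp (- \<beta>' * X i)) \<le> - (1/\<beta>) * ln (\<Sum>i\<in>I. w i * exp (- \<beta> * X i))"
proof -
  define l where "l = \<beta>' / \<beta>"
  have l: "1 \<le> l" using b by (simp add: l_def)
  have ne: "I \<noteq> {}" using s1 by auto
  have Zpos: "0 < (\<Sum>i\<in>I. w i * exp (- \<beta> * X i))"
  proof -
    have j: "exp (- \<beta> * (\<Sum>i\<in>I. w i * X i)) \<le> (\<Sum>i\<in>I. w i * exp (- \<beta> * X i))"
      by (rule jensen_exp[OF fin w s1])
    show ?thesis by (rule order_less_le_trans[OF exp_gt_zero j])
  qed
  have pw: "exp (- \<beta> * X i) powr l = exp (- \<beta>' * X i)" for i
    using b by (simp add: powr_def l_def field_simps)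
  have "(\<Sum>i\<in>I. w i * exp (- \<beta> * X i)) powr l \<le> (\<Sum>i\<in>I. w i * (exp (- \<beta> * X i) powr l))"
    using convex_on_sum[OF fin ne powr_convex[OF l] s1, where y="\<lambda>i. exp (- \<beta> * X i)"] w by simp
  also have "\<dots> = (\<Sum>i\<in>I. w i * exp (- \<beta>' * X i))" unfolding pw ..
  finally have le: "(\<Sum>i\<in>I. w i * exp (- \<beta> * X i)) powr l \<le> (\<Sum>i\<in>I. w i * exp (- \<beta>' * X i))" .
  have "l * ln (\<Sum>i\<in>I. w i * exp (- \<beta> * X i)) \<le> ln (\<Sum>i\<in>I. w i * exp (- \<beta>' * X i))"
  proof -
    have "ln ((\<Sum>i\<in>I. w i * exp (- \<beta> * X i)) powr l) \<le> ln (\<Sum>i\<in>I. w i * exp (- \<beta>' * X i))"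
    proof -
      have "0 < (\<Sum>i\<in>I. w i * exp (- \<beta> * X i)) powr l" using Zpos by simp
      then have "0 < (\<Sum>i\<in>I. w i * exp (- \<beta>' * X i))" using le by linarith
      then show ?thesis using le Zpos by (subst ln_le_cancel_iff) auto
    qed
    then show ?thesis using Zpos by (simp add: ln_powr)
  qed
  then have "(\<beta>' / \<beta>) * ln (\<Sum>i\<in>I. w i * exp (- \<beta> * X i)) \<le> ln (\<Sum>i\<in>I. w i * exp (- \<beta>' * X i))"
    by (simp add: l_def)
  then show ?thesis using b by (simp add: field_simps)
qed

locale mdpm = mdp p r S for p :: "nat \<Rightarrow> 'a::finite \<Rightarrow> nat \<Rightarrow> real" and r S +
  fixes \<mu> :: "nat \<Rightarrow> real"
  assumes mu_nn: "\<forall>s\<in>{1..Suc S}. 0 \<le> \<mu> s"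
    and mu_sum: "(\<Sum>s\<in>{1..Suc S}. \<mu> s) = 1"
    and mu_pos: "\<forall>s\<in>{1..S}. 0 < \<mu> s"
begin

lemma paths_nth: assumes "(ss,as) \<in> paths S n" "k \<le> n" shows "ss ! k \<in> {1..Suc S}"
proof -
  have "k < length ss" "set ss \<subseteq> {1..Suc S}" using assms unfolding paths_def by auto
  then show ?thesis using nth_mem[of k ss] by blast
qed

lemma pw_nn: assumes "\<pi> \<in> HR_policies" "\<forall>s\<in>{1..Suc S}. 0 \<le> \<nu> s" "(ss,as) \<in> paths S n"
  shows "0 \<le> path_weight p \<pi> \<nu> n ss as"
  unfolding path_weight_def
proof (rule mult_nonneg_nonneg)
  show "0 \<le> \<nu> (ss ! 0)" using assms(2) paths_nth[OF assms(3), of 0] by auto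
next
  show "0 \<le> (\<Prod>k<n. \<pi> (zip (take k ss) (take k as)) (ss ! k) (as ! k) * p (ss ! k) (as ! k) (ss ! Suc k))"
  proof (rule prod_nonneg)
  fix k assume "k \<in> {..<n}"
  then have "ss ! k \<in> {1..Suc S}" "ss ! Suc k \<in> {1..Suc S}" using paths_nth[OF assms(3)] by auto
  then show "0 \<le> \<pi> (zip (take k ss) (take k as)) (ss ! k) (as ! k) * p (ss ! k) (as ! k) (ss ! Suc k)"
    using HR_nn[OF assms(1)] p_nn by (intro mult_nonneg_nonneg) auto
  qed
qed

lemma expect_eq_sum: "expect p S \<pi> \<nu> n f = (\<Sum>x\<in>paths S n. path_weight p \<pi> \<nu> n (fst x) (snd x) * f (fst x) (snd x))"
  unfolding expect_def by (simp add: case_prod_beta)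

lemma pw_sum: assumes "\<pi> \<in> HR_policies"
  shows "(\<Sum>x\<in>paths S n. path_weight p \<pi> \<mu> n (fst x) (snd x)) = 1"
proof -
  have "(\<Sum>x\<in>paths S n. path_weight p \<pi> \<mu> n (fst x) (snd x)) = expect p S \<pi> \<mu> n (\<lambda>ss as. 1)"
    by (simp add: expect_eq_sum)
  also have "\<dots> = (\<Sum>s\<in>{1..Suc S}. \<mu> s * 1)"
    unfolding expect_mu[of p S \<pi> \<mu>] using expect_one[OF assms] by simp
  finally show ?thesis using mu_sum by simp
qed

lemma erm_mono: assumes \<pi>: "\<pi> \<in> HR_policies" and b: "0 \<le> \<beta>" "\<beta> \<le> \<beta>'"
  shows "erm p S \<pi> \<mu> n \<beta>' f \<le> erm p S \<pi> \<mu> n \<beta> f"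
proof -
  note w = pw_nn[OF \<pi> mu_nn] and s1 = pw_sum[OF \<pi>]
  have w': "\<And>x. x \<in> paths S n \<Longrightarrow> 0 \<le> path_weight p \<pi> \<mu> n (fst x) (snd x)" using w by auto
  show ?thesis
  proof (cases "\<beta> = 0")
    case True
    show ?thesis
    proof (cases "\<beta>' = 0")
      case True then show ?thesis using \<open>\<beta> = 0\<close> by simp
    next
      case False
      then have "0 < \<beta>'" using b by simp
      then show ?thesis unfolding erm_def expect_eq_sum using True False
        using erm_le_mean[OF finite_paths w' s1, of \<beta>' "\<lambda>x. f (fst x) (snd x)"] by simp
    qed
  next
    case False
    then have "0 < \<beta>" "\<beta>' \<noteq> 0" using b by auto
    then show ?thesis unfolding erm_def expect_eq_sum using False
      using erm_mono_sum[OF finite_paths w' s1 \<open>0 < \<beta>\<close> b(2), of "\<lambda>x. f (fst x) (snd x)"] by simp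
  qed
qed

lemma jensen_policy: assumes \<pi>: "\<pi> \<in> HR_policies"
  shows "exp (- \<beta> * expect p S \<pi> \<mu> n f) \<le> expect p S \<pi> \<mu> n (\<lambda>ss as. exp (- \<beta> * f ss as))"
  unfolding expect_eq_sum
  using jensen_exp[OF finite_paths _ pw_sum[OF \<pi>], of _ \<beta> "\<lambda>x. f (fst x) (snd x)"] pw_nn[OF \<pi> mu_nn]
  by auto

definition Em :: "nat \<Rightarrow> 'a policy \<Rightarrow> real" where
  "Em n \<pi> = expect p S \<pi> \<mu> n (ret r n)"

lemma Em_psi: "Em n \<pi> = (\<Sum>s\<in>{1..Suc S}. \<mu> s * psi n \<pi> s)"
  unfolding Em_def psi_def by (rule expect_mu)

lemma Em_bounds: "\<exists>B \<rho>. 0 \<le> B \<and> 0 < \<rho> \<and> \<rho> < 1 \<and>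
   (\<forall>\<pi>\<in>HR_policies. \<forall>n m. \<bar>Em (n+m) \<pi> - Em n \<pi>\<bar> \<le> B * \<rho> ^ n)"
proof -
  obtain C \<rho> where C: "0 < C" "0 < \<rho>" "\<rho> < 1" "\<forall>\<pi>\<in>HR_policies. \<forall>s\<in>{1..Suc S}. \<forall>n. Phi 0 indT n \<pi> s \<le> C * \<rho> ^ n"
    using geo by blast
  define B where "B = Rb * C / (1 - \<rho>)"
  have B: "0 \<le> B" unfolding B_def using C Rb_nn by auto
  have ps: "\<bar>psi (n+m) \<pi> s - psi n \<pi> s\<bar> \<le> B * \<rho> ^ n" if \<pi>: "\<pi> \<in> HR_policies" and s: "s \<in> {1..Suc S}" for \<pi> s n m
  proof -
    have "\<bar>psi (n+m) \<pi> s - psi n \<pi> s\<bar> \<le> Rb * (\<Sum>j<m. Phi 0 indT (n+j) \<pi> s)" by (rule psi_cauchy[OF \<pi> s])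
    also have "\<dots> \<le> Rb * (\<Sum>j<m. C * \<rho> ^ (n+j))"
      using C(4) \<pi> s Rb_nn by (intro mult_left_mono sum_mono) auto
    also have "\<dots> = Rb * C * \<rho> ^ n * (\<Sum>j<m. \<rho> ^ j)"
      by (simp add: sum_distrib_left power_add algebra_simps)
    also have "\<dots> \<le> Rb * C * \<rho> ^ n * (1 / (1 - \<rho>))"
      using geometric_sum_less[OF C(2,3), of "{..<m}"] Rb_nn C by (intro mult_left_mono) auto
    also have "\<dots> = B * \<rho> ^ n" unfolding B_def by simp
    finally show ?thesis .
  qed
  have "\<bar>Em (n+m) \<pi> - Em n \<pi>\<bar> \<le> B * \<rho> ^ n" if \<pi>: "\<pi> \<in> HR_policies" for \<pi> n m
  proof -
    have "\<bar>Em (n+m) \<pi> - Em n \<pi>\<bar> = \<bar>\<Sum>s\<in>{1..Suc S}. \<mu> s * (psi (n+m) \<pi> s - psi n \<pi> s)\<bar>"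
      unfolding Em_psi by (simp add: sum_subtractf right_diff_distrib)
    also have "\<dots> \<le> (\<Sum>s\<in>{1..Suc S}. \<bar>\<mu> s * (psi (n+m) \<pi> s - psi n \<pi> s)\<bar>)" by (rule sum_abs)
    also have "\<dots> \<le> (\<Sum>s\<in>{1..Suc S}. \<mu> s * (B * \<rho> ^ n))"
      using mu_nn ps[OF \<pi>] by (intro sum_mono) (auto simp: abs_mult intro!: mult_left_mono)
    also have "\<dots> = B * \<rho> ^ n" using mu_sum by (simp add: sum_distrib_right[symmetric])
    finally show ?thesis .
  qed
  then show ?thesis using B C by blast
qed

lemma Em_0: "Em 0 \<pi> = 0" unfolding Em_psi by (simp add: psi_0)

end

context mdpm begin

definition Am :: "real \<Rightarrow> nat \<Rightarrow> 'a policy \<Rightarrow> real" where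
  "Am \<beta> n \<pi> = expect p S \<pi> \<mu> n (\<lambda>ss as. exp (- \<beta> * ret r n ss as))"

lemma Am_Phi: "Am \<beta> n \<pi> = (\<Sum>s\<in>{1..Suc S}. \<mu> s * Phi \<beta> (\<lambda>_. 1) n \<pi> s)"
  unfolding Am_def Phi_def by (simp add: expect_mu[of p S \<pi> \<mu>])

lemma Am_split: "Am \<beta> n \<pi> = (\<Sum>s\<in>{1..Suc S}. \<mu> s * Phi \<beta> indT n \<pi> s) + (\<Sum>s\<in>{1..Suc S}. \<mu> s * Phi \<beta> inde n \<pi> s)"
  unfolding Am_Phi Phi_split by (simp add: distrib_left sum.distrib)

lemma Em_bound0: "\<exists>B. \<forall>\<pi>\<in>HR_policies. \<forall>n. \<bar>Em n \<pi>\<bar> \<le> B"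
proof -
  obtain B \<rho> where B: "0 \<le> B" "0 < \<rho>" "\<rho> < 1" "\<forall>\<pi>\<in>HR_policies. \<forall>n m. \<bar>Em (n+m) \<pi> - Em n \<pi>\<bar> \<le> B * \<rho> ^ n"
    using Em_bounds by blast
  have "\<bar>Em n \<pi>\<bar> \<le> B" if "\<pi> \<in> HR_policies" for \<pi> n
    using B(4)[rule_format, OF that, of 0 n] Em_0[of \<pi>] by simp
  then show ?thesis by blast
qed

lemma Em_conv: assumes "\<pi> \<in> HR_policies" shows "convergent (\<lambda>n. Em n \<pi>)"
proof -
  obtain B \<rho> where B: "0 \<le> B" "0 < \<rho>" "\<rho> < 1" "\<forall>\<pi>\<in>HR_policies. \<forall>n m. \<bar>Em (n+m) \<pi> - Em n \<pi>\<bar> \<le> B * \<rho> ^ n"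
    using Em_bounds by blast
  have "Cauchy (\<lambda>n. Em n \<pi>)"
  proof (rule metric_CauchyI)
    fix e :: real assume e: "0 < e"
    have "(\<lambda>n. B * \<rho> ^ n) \<longlonglongrightarrow> B * 0" using B by (intro tendsto_mult tendsto_const LIMSEQ_power_zero) auto
    from LIMSEQ_D[OF this, of "e/2"] e obtain M where M: "\<forall>n\<ge>M. norm (B * \<rho> ^ n - B * 0) < e/2"
      by auto
    show "\<exists>M. \<forall>m\<ge>M. \<forall>n\<ge>M. dist (Em m \<pi>) (Em n \<pi>) < e"
    proof (intro exI allI impI)
      fix m n assume mn: "M \<le> m" "M \<le> n"
      have "\<bar>Em m \<pi> - Em M \<pi>\<bar> \<le> B * \<rho> ^ M" using B(4)[rule_format, OF assms, of M "m - M"] mn(1) by simp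
      moreover have "\<bar>Em n \<pi> - Em M \<pi>\<bar> \<le> B * \<rho> ^ M" using B(4)[rule_format, OF assms, of M "n - M"] mn(2) by simp
      moreover have "B * \<rho> ^ M < e/2" using M[rule_format, of M] by simp
      ultimately show "dist (Em m \<pi>) (Em n \<pi>) < e" by (simp add: dist_real_def)
    qed
  qed
  then show ?thesis by (simp add: Cauchy_convergent_iff)
qed

lemma Am_conv: assumes \<pi>: "\<pi> \<in> HR_policies"
  shows "(\<exists>L. (\<lambda>n. Am \<beta> n \<pi>) \<longlonglongrightarrow> L) \<or> filterlim (\<lambda>n. Am \<beta> n \<pi>) at_top sequentially"
proof -
  obtain K c where Kc: "0 < K" "0 < c" "c \<le> 1" "\<forall>\<pi>\<in>HR_policies. \<forall>s\<in>{1..Suc S}. c \<le> Phi \<beta> inde K \<pi> s"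
    using absorb[of \<beta>] by blast
  define B where "B n = (\<Sum>s\<in>{1..Suc S}. \<mu> s * Phi \<beta> inde n \<pi> s)" for n
  define C where "C n = (\<Sum>s\<in>{1..Suc S}. \<mu> s * Phi \<beta> indT n \<pi> s)" for n
  have AB: "Am \<beta> n \<pi> = C n + B n" for n unfolding Am_split B_def C_def ..
  have incB: "incseq B"
  proof (rule incseq_SucI)
    fix n show "B n \<le> B (Suc n)" unfolding B_def
      using mu_nn Phi_e_mono1[OF \<pi>] by (intro sum_mono mult_left_mono) auto
  qed
  have C0: "0 \<le> C n" for n unfolding C_def
    using mu_nn Phi_nn[OF \<pi>, of _ indT] by (intro sum_nonneg mult_nonneg_nonneg) (auto simp: indT_def)
  have CB: "C n \<le> (1/c) * (B (n+K) - B n)" for n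
  proof -
    have "C n \<le> (\<Sum>s\<in>{1..Suc S}. \<mu> s * ((1/c) * (Phi \<beta> inde (n+K) \<pi> s - Phi \<beta> inde n \<pi> s)))"
      unfolding C_def using mu_nn BC[OF Kc(2) Kc(4) \<pi>] by (intro sum_mono mult_left_mono) auto
    also have "\<dots> = (1/c) * (B (n+K) - B n)" unfolding B_def
      by (simp add: sum_distrib_left sum_subtractf algebra_simps)
    finally show ?thesis .
  qed
  show ?thesis
  proof (cases "bdd_above (range B)")
    case True
    then have BL: "B \<longlonglongrightarrow> (SUP n. B n)" using incB by (rule LIMSEQ_incseq_SUP)
    then have "(\<lambda>n. B (n+K)) \<longlonglongrightarrow> (SUP n. B n)" by (rule LIMSEQ_ignore_initial_segment)
    then have "(\<lambda>n. (1/c) * (B (n+K) - B n)) \<longlonglongrightarrow> (1/c) * ((SUP n. B n) - (SUP n. B n))"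
      by (intro tendsto_mult[OF tendsto_const] tendsto_diff BL)
    then have lim0: "(\<lambda>n. (1/c) * (B (n+K) - B n)) \<longlonglongrightarrow> 0" by simp
    have e1: "eventually (\<lambda>n. 0 \<le> C n) sequentially" using C0 by simp
    have e2: "eventually (\<lambda>n. C n \<le> (1/c) * (B (n+K) - B n)) sequentially" using CB by simp
    have "C \<longlonglongrightarrow> 0" by (rule tendsto_sandwich[OF e1 e2 tendsto_const lim0])
    then have "(\<lambda>n. C n + B n) \<longlonglongrightarrow> 0 + (SUP n. B n)" using BL by (rule tendsto_add)
    then show ?thesis unfolding AB by auto
  next
    case False
    have "filterlim B at_top sequentially"
    proof (subst filterlim_at_top, intro allI)
      fix Z :: real
      obtain N where N: "Z \<le> B N"
      proof -
        have "\<not> (\<forall>n. B n \<le> Z)" using False by (auto simp: bdd_above_def)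
        then obtain N where "Z < B N" by (auto simp: not_le)
        then show ?thesis using that[of N] by simp
      qed
      have "\<forall>n\<ge>N. Z \<le> B n"
      proof (intro allI impI)
        fix n assume "N \<le> n" then have "B N \<le> B n" using incB by (simp add: incseq_def)
        then show "Z \<le> B n" using N by simp
      qed
      then show "eventually (\<lambda>n. Z \<le> B n) sequentially"
        unfolding eventually_sequentially by blast
    qed
    then have "filterlim (\<lambda>n. Am \<beta> n \<pi>) at_top sequentially"
      by (rule filterlim_at_top_mono) (auto simp: AB C0)
    then show ?thesis by blast
  qed
qed

lemma erm_Am: "0 < \<beta> \<Longrightarrow> erm p S \<pi> \<mu> n \<beta> (ret r n) = - (1/\<beta>) * ln (Am \<beta> n \<pi>)"
  unfolding erm_def Am_def by simp

lemma Am_lb: assumes \<pi>: "\<pi> \<in> HR_policies" and b: "0 < \<beta>" and B: "\<forall>n. \<bar>Em n \<pi>\<bar> \<le> B"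
  shows "exp (- \<beta> * B) \<le> Am \<beta> n \<pi>"
proof -
  have "exp (- \<beta> * B) \<le> exp (- \<beta> * Em n \<pi>)" using B b by (simp add: abs_le_iff)
  also have "\<dots> \<le> Am \<beta> n \<pi>" unfolding Em_def Am_def by (rule jensen_policy[OF \<pi>])
  finally show ?thesis .
qed

lemma erm_conv: assumes \<pi>: "\<pi> \<in> HR_policies" and b: "0 < \<beta>"
  shows "convergent (\<lambda>t. ereal (erm p S \<pi> \<mu> (Suc t) \<beta> (ret r (Suc t))))"
proof -
  obtain B where B: "\<forall>\<pi>\<in>HR_policies. \<forall>n. \<bar>Em n \<pi>\<bar> \<le> B" using Em_bound0 by blast
  have lb: "exp (- \<beta> * B) \<le> Am \<beta> n \<pi>" for n using Am_lb[OF \<pi> b] B \<pi> by blast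
  consider (fin) L where "(\<lambda>n. Am \<beta> n \<pi>) \<longlonglongrightarrow> L" | (inf) "filterlim (\<lambda>n. Am \<beta> n \<pi>) at_top sequentially"
    using Am_conv[OF \<pi>, of \<beta>] by blast
  then show ?thesis
  proof cases
    case fin
    then have L1: "(\<lambda>t. Am \<beta> (Suc t) \<pi>) \<longlonglongrightarrow> L" by (rule LIMSEQ_Suc)
    have "exp (- \<beta> * B) \<le> L" using fin lb by (intro LIMSEQ_le_const) auto
    then have Lpos: "0 < L" using exp_gt_zero[of "- \<beta> * B"] by linarith
    have "(\<lambda>t. - (1/\<beta>) * ln (Am \<beta> (Suc t) \<pi>)) \<longlonglongrightarrow> - (1/\<beta>) * ln L"
      using L1 Lpos by (intro tendsto_intros) auto
    then have "(\<lambda>t. ereal (erm p S \<pi> \<mu> (Suc t) \<beta> (ret r (Suc t)))) \<longlonglongrightarrow> ereal (- (1/\<beta>) * ln L)"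
      using b by (simp add: erm_Am)
    then show ?thesis by (auto simp: convergent_def)
  next
    case inf
    then have "filterlim (\<lambda>t. Am \<beta> (Suc t) \<pi>) at_top sequentially"
      by (rule filterlim_compose) (rule filterlim_Suc)
    then have "filterlim (\<lambda>t. ln (Am \<beta> (Suc t) \<pi>)) at_top sequentially"
      by (rule filterlim_compose[OF ln_at_top])
    then have "filterlim (\<lambda>t. (1/\<beta>) * ln (Am \<beta> (Suc t) \<pi>)) at_top sequentially"
      using b by (intro filterlim_tendsto_pos_mult_at_top[OF tendsto_const]) auto
    then have "filterlim (\<lambda>t. - (1/\<beta>) * ln (Am \<beta> (Suc t) \<pi>)) at_bot sequentially"
      by (simp add: filterlim_uminus_at_bot)
    then have "((ereal \<circ> (\<lambda>t. - (1/\<beta>) * ln (Am \<beta> (Suc t) \<pi>))) \<longlonglongrightarrow> - \<infinity>)"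
      by (simp only: ereal_tendsto_simps2)
    then have "(\<lambda>t. ereal (erm p S \<pi> \<mu> (Suc t) \<beta> (ret r (Suc t)))) \<longlonglongrightarrow> - \<infinity>"
      using b by (simp add: erm_Am comp_def)
    then show ?thesis by (auto simp: convergent_def)
  qed
qed

end

lemma grid_pos: assumes "0 < \<alpha>" "\<alpha> < 1" "0 < \<delta>" "\<gamma> \<in> beta_grid \<alpha> \<gamma>0 \<delta>" shows "0 < \<gamma>"
proof -
  have "ln \<alpha> < 0" using assms by simp
  then have "ln \<alpha> / \<delta> < 0" using assms(3) by (simp add: divide_neg_pos)
  then show ?thesis using assms(3,4) \<open>ln \<alpha> < 0\<close> unfolding beta_grid_def by (auto simp: divide_pos_neg)
qed

lemma grid_mem0: assumes "0 < \<gamma>0" "\<gamma>0 < - ln \<alpha> / \<delta>" shows "\<gamma>0 \<in> beta_grid \<alpha> \<gamma>0 \<delta>"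
  unfolding beta_grid_def using assms by (auto intro!: exI[of _ 0])

lemma grid_memK: "- ln \<alpha> / \<delta> \<in> beta_grid \<alpha> \<gamma>0 \<delta>"
  unfolding beta_grid_def by auto

lemma grid_finite: assumes "0 < \<alpha>" "\<alpha> < 1" "0 < \<delta>" shows "finite (beta_grid \<alpha> \<gamma>0 \<delta>)"
proof -
  define L where "L = - ln \<alpha>"
  have L: "0 < L" using assms unfolding L_def by simp
  define c where "c = \<delta> / L"
  have c: "0 < c" using L assms unfolding c_def by simp
  have kc: "real k * \<delta> / ln \<alpha> = - (real k * c)" for k unfolding c_def L_def by simp
  define N where "N = nat (ceiling ((1/\<gamma>0) / c))"
  have "beta_grid \<alpha> \<gamma>0 \<delta> \<subseteq> (\<lambda>k. 1 / (1/\<gamma>0 + real k * \<delta> / ln \<alpha>)) ` {..<N} \<union> {- ln \<alpha> / \<delta>}"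
  proof
    fix \<beta> assume "\<beta> \<in> beta_grid \<alpha> \<gamma>0 \<delta>"
    then consider "\<beta> = - ln \<alpha> / \<delta>" | k where "0 < 1/\<gamma>0 - real k * c" "\<beta> = 1 / (1/\<gamma>0 - real k * c)"
      unfolding beta_grid_def kc by auto
    then show "\<beta> \<in> (\<lambda>k. 1 / (1/\<gamma>0 + real k * \<delta> / ln \<alpha>)) ` {..<N} \<union> {- ln \<alpha> / \<delta>}"
    proof cases
      case 1 then show ?thesis by simp
    next
      case (2 k)
      have "real k * c < 1/\<gamma>0" using 2 by simp
      then have "real k < (1/\<gamma>0) / c" using c by (metis mult.commute pos_less_divide_eq)
      then have "k < N" unfolding N_def by linarith
      then show ?thesis using 2 kc by auto
    qed
  qed
  then show ?thesis by (rule finite_subset) auto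
qed

lemma grid_point:
  fixes f :: "real \<Rightarrow> real"
  assumes a: "0 < \<alpha>" "\<alpha> < 1" and d: "0 < \<delta>" and g0: "0 < \<gamma>0" "\<gamma>0 < - ln \<alpha> / \<delta>"
    and mono: "\<And>x y. 0 \<le> x \<Longrightarrow> x \<le> y \<Longrightarrow> f y \<le> f x" and b: "0 < \<beta>"
  shows "f \<beta> + ln \<alpha> / \<beta> \<le> f 0 + ln \<alpha> / \<gamma>0 \<or> (\<exists>\<gamma>\<in>beta_grid \<alpha> \<gamma>0 \<delta>. f \<beta> + ln \<alpha> / \<beta> \<le> f \<gamma> + ln \<alpha> / \<gamma> + \<delta>)"
proof -
  define L where "L = - ln \<alpha>"
  have L: "0 < L" using a unfolding L_def by simp
  have lnL: "ln \<alpha> = - L" unfolding L_def by simp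
  define c where "c = \<delta> / L"
  have c: "0 < c" using L d unfolding c_def by simp
  define u where "u = 1 / \<beta>"
  define u0 where "u0 = 1 / \<gamma>0"
  have u: "0 < u" using b unfolding u_def by simp
  have u0c: "c < u0" using g0 L d unfolding u0_def c_def L_def by (simp add: field_simps)
  consider (small) "\<beta> \<le> \<gamma>0" | (large) "L / \<delta> \<le> \<beta>" | (mid) "\<gamma>0 < \<beta>" "\<beta> < L / \<delta>" by linarith
  then show ?thesis
  proof cases
    case small
    have "f \<beta> \<le> f 0" using mono b by simp
    moreover have "ln \<alpha> / \<beta> \<le> ln \<alpha> / \<gamma>0" using small b g0 L unfolding lnL
      by (simp add: divide_le_eq_1 frac_le field_simps)
    ultimately show ?thesis by simp
  next
    case large
    have mem: "L / \<delta> \<in> beta_grid \<alpha> \<gamma>0 \<delta>" using grid_memK[of \<alpha> \<delta> \<gamma>0] unfolding L_def by simp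
    have "f \<beta> \<le> f (L / \<delta>)" using mono large L d by simp
    moreover have "ln \<alpha> / \<beta> \<le> 0" using b L unfolding lnL by simp
    moreover have "ln \<alpha> / (L / \<delta>) = - \<delta>" using L d unfolding lnL by simp
    ultimately show ?thesis using mem by force
  next
    case mid
    have bd: "\<beta> * \<delta> < L" using mid(2) d by (simp add: pos_less_divide_eq)
    have uc: "c < u"
    proof -
      have "\<delta> / L = (\<delta> * \<beta>) / (L * \<beta>)" using b L by simp
      also have "\<dots> < L / (L * \<beta>)" using bd b L by (intro divide_strict_right_mono) (auto simp: mult.commute)
      also have "\<dots> = 1 / \<beta>" using L by simp
      finally show ?thesis unfolding c_def u_def .
    qed
    have uu0: "u < u0" using mid g0 unfolding u_def u0_def by (simp add: field_simps)
    define k where "k = nat (floor ((u0 - u) / c))"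
    have k1: "real k \<le> (u0 - u) / c" using uu0 c unfolding k_def by simp
    have k2: "(u0 - u) / c < real k + 1" using uu0 c unfolding k_def by linarith
    have k1': "real k * c \<le> u0 - u" using k1 c by (simp add: field_simps)
    have k2': "u0 - u < (real k + 1) * c" using k2 c by (simp add: field_simps)
    define \<gamma> where "\<gamma> = 1 / (u0 - real k * c)"
    have dpos: "0 < u0 - real k * c" using k1' u by linarith
    have kc: "real k * \<delta> / ln \<alpha> = - (real k * c)" unfolding c_def lnL by simp
    have mem: "\<gamma> \<in> beta_grid \<alpha> \<gamma>0 \<delta>"
    proof -
      have "\<gamma> < - ln \<alpha> / \<delta>"
      proof -
        have "c < u0 - real k * c" using k1' uc by linarith
        then have "1 / (u0 - real k * c) < 1 / c" using c by (intro divide_strict_left_mono) auto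
        then show ?thesis unfolding \<gamma>_def c_def lnL using L d by simp
      qed
      then show ?thesis unfolding beta_grid_def using dpos kc
        by (auto simp: \<gamma>_def u0_def intro!: exI[of _ k])
    qed
    have gpos: "0 < \<gamma>" using dpos unfolding \<gamma>_def by simp
    have "\<gamma> \<le> \<beta>"
    proof -
      have "u \<le> u0 - real k * c" using k1' by linarith
      then have "1 / (u0 - real k * c) \<le> 1 / u" using u by (intro divide_left_mono) auto
      then show ?thesis unfolding \<gamma>_def u_def by simp
    qed
    then have "f \<beta> \<le> f \<gamma>" using mono gpos by simp
    moreover have "ln \<alpha> / \<beta> \<le> ln \<alpha> / \<gamma> + \<delta>"
    proof -
      have "ln \<alpha> / \<beta> = - L * u" unfolding lnL u_def by simp
      moreover have "ln \<alpha> / \<gamma> = - L * (u0 - real k * c)" unfolding lnL \<gamma>_def by simp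
      moreover have "L * (u0 - real k * c - u) \<le> L * c" using k2' L by (intro mult_left_mono) (auto simp: algebra_simps)
      moreover have "L * c = \<delta>" unfolding c_def using L by simp
      ultimately show ?thesis by (simp add: algebra_simps)
    qed
    ultimately show ?thesis using mem by force
  qed
qed

lemma ereal_aux: fixes x :: ereal assumes "x + ereal c \<le> ereal z" "0 < e" shows "x < ereal (z - c + e)"
  using assms by (cases x) auto

lemma evar_conv_abs:
  fixes f :: "nat \<Rightarrow> real \<Rightarrow> real" and \<alpha> :: real
  assumes a: "0 < \<alpha>" "\<alpha> < 1"
    and mono: "\<And>t x y. 0 \<le> x \<Longrightarrow> x \<le> y \<Longrightarrow> f t y \<le> f t x"
    and conv: "\<And>\<beta>. 0 < \<beta> \<Longrightarrow> convergent (\<lambda>t. ereal (f t \<beta>))"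
    and conv0: "convergent (\<lambda>t. f t 0)"
  shows "convergent (\<lambda>t. ereal (Sup ((\<lambda>\<beta>. f t \<beta> + ln \<alpha> / \<beta>) ` {0<..})))"
proof -
  define E where "E t = Sup ((\<lambda>\<beta>. f t \<beta> + ln \<alpha> / \<beta>) ` {0<..})" for t
  have lna: "ln \<alpha> < 0" using a by simp
  have le0: "f t \<beta> + ln \<alpha> / \<beta> \<le> f t 0" if "0 < \<beta>" for t \<beta>
  proof -
    have "f t \<beta> \<le> f t 0" using mono that by simp
    moreover have "ln \<alpha> / \<beta> < 0" using lna that by (simp add: divide_neg_pos)
    ultimately show ?thesis by simp
  qed
  have bdd: "bdd_above ((\<lambda>\<beta>. f t \<beta> + ln \<alpha> / \<beta>) ` {0<..})" for t
    using le0 by (intro bdd_aboveI[of _ "f t 0"]) auto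
  have Eub: "f t \<beta> + ln \<alpha> / \<beta> \<le> E t" if "0 < \<beta>" for t \<beta>
    unfolding E_def using that bdd by (intro cSup_upper) auto
  have Elub: "E t \<le> z" if "\<And>\<beta>. 0 < \<beta> \<Longrightarrow> f t \<beta> + ln \<alpha> / \<beta> \<le> z" for t z
    unfolding E_def using that by (intro cSup_least) auto
  define F where "F \<beta> = lim (\<lambda>t. ereal (f t \<beta>))" for \<beta>
  have FL: "(\<lambda>t. ereal (f t \<beta>)) \<longlonglongrightarrow> F \<beta>" if "0 < \<beta>" for \<beta>
    using conv[OF that] unfolding F_def by (simp add: convergent_LIMSEQ_iff)
  obtain F0 where F0: "(\<lambda>t. f t 0) \<longlonglongrightarrow> F0" using conv0 by (auto simp: convergent_def)
  define Einf where "Einf = (SUP \<beta>\<in>{0<..}. F \<beta> + ereal (ln \<alpha> / \<beta>))"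
  have A: "Einf \<le> liminf (\<lambda>t. ereal (E t))"
    unfolding Einf_def
  proof (rule SUP_least)
    fix \<beta> :: real assume "\<beta> \<in> {0<..}"
    then have b: "0 < \<beta>" by simp
    have "F \<beta> + ereal (ln \<alpha> / \<beta>) = liminf (\<lambda>t. ereal (f t \<beta>)) + ereal (ln \<alpha> / \<beta>)"
      using lim_imp_Liminf[OF trivial_limit_sequentially FL[OF b]] by simp
    also have "\<dots> = liminf (\<lambda>t. ereal (f t \<beta>) + ereal (ln \<alpha> / \<beta>))"
      by (rule Liminf_add_ereal_right[symmetric]) auto
    also have "\<dots> \<le> liminf (\<lambda>t. ereal (E t))"
      using Eub[OF b] by (intro Liminf_mono) auto
    finally show "F \<beta> + ereal (ln \<alpha> / \<beta>) \<le> liminf (\<lambda>t. ereal (E t))" .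
  qed
  have B: "limsup (\<lambda>t. ereal (E t)) \<le> Einf"
  proof (rule ereal_le_real)
    fix z assume z: "Einf \<le> ereal z"
    show "limsup (\<lambda>t. ereal (E t)) \<le> ereal z"
    proof (rule ereal_le_epsilon2)
      fix \<epsilon> :: real assume e: "0 < \<epsilon>"
      define d where "d = \<epsilon> / 2"
      have d: "0 < d" "d < \<epsilon>" using e unfolding d_def by auto
      define L where "L = - ln \<alpha>"
      have L: "0 < L" using lna unfolding L_def by simp
      define \<gamma>0 where "\<gamma>0 = L / (\<bar>F0 - z\<bar> + d + 1)"
      have g0: "0 < \<gamma>0" using L d unfolding \<gamma>0_def by (simp add: add_pos_nonneg)
      have g0b: "\<gamma>0 < - ln \<alpha> / d"
      proof -
        have "L / (\<bar>F0 - z\<bar> + d + 1) < L / d" using L d by (intro divide_strict_left_mono) auto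
        then show ?thesis unfolding \<gamma>0_def L_def by simp
      qed
      have lg0: "ln \<alpha> / \<gamma>0 = - (\<bar>F0 - z\<bar> + d + 1)" unfolding \<gamma>0_def L_def using L unfolding L_def by simp
      define G where "G = beta_grid \<alpha> \<gamma>0 d"
      have finG: "finite G" unfolding G_def using grid_finite[OF a d(1)] .
      have ev1: "eventually (\<lambda>t. \<forall>\<gamma>\<in>G. f t \<gamma> + ln \<alpha> / \<gamma> + d < z + \<epsilon>) sequentially"
      proof (rule eventually_ball_finite[OF finG], rule ballI)
        fix \<gamma> assume gG: "\<gamma> \<in> G"
        then have gp: "0 < \<gamma>" unfolding G_def using grid_pos[OF a d(1)] by blast
        have "F \<gamma> + ereal (ln \<alpha> / \<gamma>) \<le> Einf" unfolding Einf_def using gp by (intro SUP_upper) auto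
        then have "F \<gamma> + ereal (ln \<alpha> / \<gamma>) \<le> ereal z" using z by simp
        then have "F \<gamma> < ereal (z - ln \<alpha> / \<gamma> + (\<epsilon> - d))" using d by (intro ereal_aux) auto
        then have "eventually (\<lambda>t. ereal (f t \<gamma>) < ereal (z - ln \<alpha> / \<gamma> + (\<epsilon> - d))) sequentially"
          by (rule order_tendstoD(2)[OF FL[OF gp]])
        then show "eventually (\<lambda>t. f t \<gamma> + ln \<alpha> / \<gamma> + d < z + \<epsilon>) sequentially"
          by eventually_elim simp
      qed
      have "F0 + ln \<alpha> / \<gamma>0 < z + \<epsilon>" using lg0 e d by (simp add: abs_if)
      moreover have "(\<lambda>t. f t 0 + ln \<alpha> / \<gamma>0) \<longlonglongrightarrow> F0 + ln \<alpha> / \<gamma>0" using F0 by (rule tendsto_add) simp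
      ultimately have ev2: "eventually (\<lambda>t. f t 0 + ln \<alpha> / \<gamma>0 < z + \<epsilon>) sequentially"
        by (simp add: order_tendstoD(2))
      have "eventually (\<lambda>t. ereal (E t) \<le> ereal (z + \<epsilon>)) sequentially"
        using ev1 ev2
      proof eventually_elim
        case (elim t)
        have "E t \<le> z + \<epsilon>"
        proof (rule Elub)
          fix \<beta> :: real assume b: "0 < \<beta>"
          have "f t \<beta> + ln \<alpha> / \<beta> \<le> f t 0 + ln \<alpha> / \<gamma>0 \<or> (\<exists>\<gamma>\<in>G. f t \<beta> + ln \<alpha> / \<beta> \<le> f t \<gamma> + ln \<alpha> / \<gamma> + d)"
            unfolding G_def by (rule grid_point[OF a d(1) g0 g0b mono b])
          then show "f t \<beta> + ln \<alpha> / \<beta> \<le> z + \<epsilon>" using elim by force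
        qed
        then show ?case by simp
      qed
      then have "limsup (\<lambda>t. ereal (E t)) \<le> ereal (z + \<epsilon>)" by (rule Limsup_bounded)
      then show "limsup (\<lambda>t. ereal (E t)) \<le> ereal z + ereal \<epsilon>" by simp
    qed
  qed
  have "liminf (\<lambda>t. ereal (E t)) \<le> limsup (\<lambda>t. ereal (E t))" by (rule Liminf_le_Limsup) simp
  then have "limsup (\<lambda>t. ereal (E t)) = liminf (\<lambda>t. ereal (E t))" using A B by simp
  then show ?thesis unfolding E_def by (simp add: convergent_ereal)
qed

context mdpm begin

definition Top :: "real \<Rightarrow> (nat \<Rightarrow> real) \<Rightarrow> nat \<Rightarrow> real" where
  "Top \<beta> w s = Min ((\<lambda>a. \<Sum>s1\<in>{1..Suc S}. W \<beta> s a s1 * w s1) ` UNIV)"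

lemma Top_le: "Top \<beta> w s \<le> (\<Sum>s1\<in>{1..Suc S}. W \<beta> s a s1 * w s1)"
  unfolding Top_def by (rule Min_le) auto

lemma Top_ex: "\<exists>a. Top \<beta> w s = (\<Sum>s1\<in>{1..Suc S}. W \<beta> s a s1 * w s1)"
proof -
  have "Top \<beta> w s \<in> (\<lambda>a. \<Sum>s1\<in>{1..Suc S}. W \<beta> s a s1 * w s1) ` UNIV"
    unfolding Top_def by (rule Min_in) auto
  then show ?thesis by auto
qed

lemma Top_mono: assumes "\<forall>s1\<in>{1..Suc S}. u s1 \<le> w s1" "s \<in> {1..Suc S}" shows "Top \<beta> u s \<le> Top \<beta> w s"
proof -
  obtain a where a: "Top \<beta> w s = (\<Sum>s1\<in>{1..Suc S}. W \<beta> s a s1 * w s1)" using Top_ex by blast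
  have "Top \<beta> u s \<le> (\<Sum>s1\<in>{1..Suc S}. W \<beta> s a s1 * u s1)" by (rule Top_le)
  also have "\<dots> \<le> (\<Sum>s1\<in>{1..Suc S}. W \<beta> s a s1 * w s1)"
    using assms W_nn[OF assms(2)] by (intro sum_mono mult_left_mono) auto
  finally show ?thesis using a by simp
qed

definition wv :: "real \<Rightarrow> nat \<Rightarrow> nat \<Rightarrow> real" where
  "wv \<beta> n = (Top \<beta> ^^ n) (\<lambda>_. 1)"

lemma wv_0: "wv \<beta> 0 = (\<lambda>_. 1)" unfolding wv_def by simp
lemma wv_Suc: "wv \<beta> (Suc n) = Top \<beta> (wv \<beta> n)" unfolding wv_def by simp

lemma exists_pos_p: assumes "s \<in> {1..Suc S}" shows "\<exists>s1\<in>{1..Suc S}. 0 < p s a s1"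
proof (rule ccontr)
  assume "\<not> (\<exists>s1\<in>{1..Suc S}. 0 < p s a s1)"
  then have "\<forall>s1\<in>{1..Suc S}. p s a s1 \<le> 0" by (auto simp: not_less)
  then have "(\<Sum>s1\<in>{1..Suc S}. p s a s1) \<le> 0" by (intro sum_nonpos) auto
  then show False using p_sum1[OF assms] by simp
qed

lemma wv_pos: "s \<in> {1..Suc S} \<Longrightarrow> 0 < wv \<beta> n s"
proof (induction n arbitrary: s)
  case 0 then show ?case by (simp add: wv_0)
next
  case (Suc n)
  obtain a where a: "Top \<beta> (wv \<beta> n) s = (\<Sum>s1\<in>{1..Suc S}. W \<beta> s a s1 * wv \<beta> n s1)" using Top_ex by blast
  obtain s1 where s1: "s1 \<in> {1..Suc S}" "0 < p s a s1" using exists_pos_p[OF Suc.prems] by blast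
  have "0 < W \<beta> s a s1 * wv \<beta> n s1" using s1 Suc.IH[OF s1(1)] by (simp add: W_def)
  also have "\<dots> \<le> (\<Sum>s1\<in>{1..Suc S}. W \<beta> s a s1 * wv \<beta> n s1)"
    using s1(1) by (intro member_le_sum) (auto intro!: mult_nonneg_nonneg W_nn[OF Suc.prems] less_imp_le[OF Suc.IH])
  finally show ?case using a by (simp add: wv_Suc)
qed

lemma Top_sink: "Top \<beta> w (Suc S) = w (Suc S)"
  unfolding Top_def by (simp only: sum_W_sink) simp

lemma wv_sink: "wv \<beta> n (Suc S) = 1"
  by (induction n) (simp_all add: wv_0 wv_Suc Top_sink)

lemma wv_le_Phi: "\<pi> \<in> HR_policies \<Longrightarrow> s \<in> {1..Suc S} \<Longrightarrow> wv \<beta> n s \<le> Phi \<beta> (\<lambda>_. 1) n \<pi> s"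
proof (induction n arbitrary: \<pi> s)
  case 0 then show ?case by (simp add: wv_0 Phi_0)
next
  case (Suc n)
  have "wv \<beta> (Suc n) s = (\<Sum>a\<in>UNIV. \<pi> [] s a * Top \<beta> (wv \<beta> n) s)"
    using HR_sum[OF Suc.prems(1)] by (simp add: wv_Suc sum_distrib_right[symmetric])
  also have "\<dots> \<le> (\<Sum>a\<in>UNIV. \<pi> [] s a * (\<Sum>s1\<in>{1..Suc S}. W \<beta> s a s1 * wv \<beta> n s1))"
    using HR_nn[OF Suc.prems(1)] Top_le by (intro sum_mono mult_left_mono) auto
  also have "\<dots> \<le> (\<Sum>a\<in>UNIV. \<pi> [] s a * (\<Sum>s1\<in>{1..Suc S}. W \<beta> s a s1 * Phi \<beta> (\<lambda>_. 1) n (shift \<pi> s a) s1))"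
  proof (rule sum_mono, rule mult_left_mono)
    fix a
    show "(\<Sum>s1\<in>{1..Suc S}. W \<beta> s a s1 * wv \<beta> n s1) \<le> (\<Sum>s1\<in>{1..Suc S}. W \<beta> s a s1 * Phi \<beta> (\<lambda>_. 1) n (shift \<pi> s a) s1)"
      using W_nn[OF Suc.prems(2)] Suc.IH[OF shift_HR[OF Suc.prems(1)]] by (intro sum_mono mult_left_mono) auto
    show "0 \<le> \<pi> [] s a" using HR_nn[OF Suc.prems(1)] by simp
  qed
  also have "\<dots> = Phi \<beta> (\<lambda>_. 1) (Suc n) \<pi> s" using Phi_Suc[OF Suc.prems(2)] by simp
  finally show ?case .
qed

definition an :: "real \<Rightarrow> nat \<Rightarrow> real" where
  "an \<beta> n = (\<Sum>s\<in>{1..Suc S}. \<mu> s * wv \<beta> n s)"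

lemma an_le_Am: "\<pi> \<in> HR_policies \<Longrightarrow> an \<beta> n \<le> Am \<beta> n \<pi>"
  unfolding an_def Am_Phi using mu_nn wv_le_Phi by (intro sum_mono mult_left_mono) auto

lemma an_pos: "0 < an \<beta> n"
proof -
  have pos: "\<forall>s\<in>{1..Suc S}. 0 \<le> \<mu> s * wv \<beta> n s" using mu_nn by (auto intro!: mult_nonneg_nonneg less_imp_le[OF wv_pos])
  obtain s0 where s0: "s0 \<in> {1..Suc S}" "0 < \<mu> s0"
  proof -
    have "\<not> (\<forall>s\<in>{1..Suc S}. \<mu> s \<le> 0)"
    proof
      assume "\<forall>s\<in>{1..Suc S}. \<mu> s \<le> 0"
      then have "(\<Sum>s\<in>{1..Suc S}. \<mu> s) \<le> 0" by (intro sum_nonpos) auto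
      then show False using mu_sum by simp
    qed
    then show ?thesis using that by force
  qed
  have "0 < \<mu> s0 * wv \<beta> n s0" using s0 wv_pos by simp
  also have "\<dots> \<le> an \<beta> n" unfolding an_def using s0(1) pos by (intro member_le_sum) auto
  finally show ?thesis .
qed

lemma super_exists:
  assumes L: "liminf (\<lambda>n. ereal (an \<beta> n)) = ereal L"
  shows "\<exists>v d. (\<forall>s\<in>{1..Suc S}. 0 \<le> v s) \<and> v (Suc S) = 1 \<and> (\<Sum>s\<in>{1..Suc S}. \<mu> s * v s) \<le> L \<and>
     (\<forall>s\<in>{1..Suc S}. (\<Sum>s1\<in>{1..Suc S}. W \<beta> s (d s) s1 * v s1) \<le> v s)"
proof -
  define u where "u N s = Inf ((\<lambda>n. wv \<beta> n s) ` {N..})" for N s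
  have bddb: "bdd_below ((\<lambda>n. wv \<beta> n s) ` {N..})" if "s \<in> {1..Suc S}" for N s
    using wv_pos[OF that] by (intro bdd_belowI[of _ 0]) (auto intro: less_imp_le)
  have u_le: "u N s \<le> wv \<beta> n s" if "s \<in> {1..Suc S}" "N \<le> n" for N n s
    unfolding u_def using that bddb[OF that(1)] by (intro cInf_lower) auto
  have u_ge: "z \<le> u N s" if "\<And>n. N \<le> n \<Longrightarrow> z \<le> wv \<beta> n s" for N s z
    unfolding u_def using that by (intro cInf_greatest) auto
  have u_nn: "0 \<le> u N s" if "s \<in> {1..Suc S}" for N s
    using wv_pos[OF that] by (intro u_ge) (auto intro: less_imp_le)
  have u_mono: "u N s \<le> u N' s" if "s \<in> {1..Suc S}" "N \<le> N'" for N N' s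
    using u_le[OF that(1)] that(2) by (intro u_ge) auto
  have u_sink: "u N (Suc S) = 1" for N
    unfolding u_def wv_sink by simp
  have uL: "(\<Sum>s\<in>{1..Suc S}. \<mu> s * u N s) \<le> L" for N
  proof -
    have "ereal (\<Sum>s\<in>{1..Suc S}. \<mu> s * u N s) \<le> (INF n\<in>{N..}. ereal (an \<beta> n))"
    proof (rule INF_greatest)
      fix n assume "n \<in> {N..}"
      then show "ereal (\<Sum>s\<in>{1..Suc S}. \<mu> s * u N s) \<le> ereal (an \<beta> n)"
        unfolding an_def using mu_nn u_le by (auto intro!: sum_mono mult_left_mono)
    qed
    also have "\<dots> \<le> liminf (\<lambda>n. ereal (an \<beta> n))" unfolding liminf_SUP_INF by (rule SUP_upper) simp
    finally show ?thesis using L by simp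
  qed
  have u_bdd: "u N s \<le> L / \<mu> s" if "s \<in> {1..S}" for N s
  proof -
    have sS: "s \<in> {1..Suc S}" using that by auto
    have "\<mu> s * u N s \<le> (\<Sum>s\<in>{1..Suc S}. \<mu> s * u N s)"
      using sS mu_nn u_nn by (intro member_le_sum) auto
    then have "\<mu> s * u N s \<le> L" using uL[of N] by simp
    then show ?thesis using mu_pos that by (simp add: field_simps)
  qed
  have u_bdd': "\<exists>B. \<forall>N. u N s \<le> B" if "s \<in> {1..Suc S}" for s
  proof (cases "s = Suc S")
    case True then show ?thesis using u_sink by auto
  next
    case False then have "s \<in> {1..S}" using that by auto
    then show ?thesis using u_bdd by blast
  qed
  define v where "v s = (SUP N. u N s)" for s
  have uv: "(\<lambda>N. u N s) \<longlonglongrightarrow> v s" if "s \<in> {1..Suc S}" for s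
  proof -
    have "incseq (\<lambda>N. u N s)" using u_mono[OF that] by (simp add: incseq_def)
    moreover have "bdd_above (range (\<lambda>N. u N s))" using u_bdd'[OF that] by (auto simp: bdd_above_def)
    ultimately show ?thesis unfolding v_def by (intro LIMSEQ_incseq_SUP)
  qed
  have u_le_v: "u N s \<le> v s" if "s \<in> {1..Suc S}" for N s
    using uv[OF that] u_mono[OF that] by (intro LIMSEQ_le_const[OF uv[OF that]]) (auto intro: exI[of _ N])
  have v_nn: "0 \<le> v s" if "s \<in> {1..Suc S}" for s using u_nn[OF that, of 0] u_le_v[OF that, of 0] by simp
  have v_sink: "v (Suc S) = 1" unfolding v_def u_sink by simp
  have vL: "(\<Sum>s\<in>{1..Suc S}. \<mu> s * v s) \<le> L"
  proof -
    have "(\<lambda>N. \<Sum>s\<in>{1..Suc S}. \<mu> s * u N s) \<longlonglongrightarrow> (\<Sum>s\<in>{1..Suc S}. \<mu> s * v s)"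
      by (rule tendsto_sum) (rule tendsto_mult[OF tendsto_const uv], simp)
    then show ?thesis using uL by (intro LIMSEQ_le_const2) auto
  qed
  have Tu: "Top \<beta> (u N) s \<le> u (Suc N) s" if "s \<in> {1..Suc S}" for N s
  proof (rule u_ge)
    fix n assume n: "Suc N \<le> n"
    then obtain m where m: "n = Suc m" "N \<le> m" by (cases n) auto
    have "Top \<beta> (u N) s \<le> Top \<beta> (wv \<beta> m) s" using u_le m(2) that by (intro Top_mono) auto
    then show "Top \<beta> (u N) s \<le> wv \<beta> n s" using m(1) by (simp add: wv_Suc)
  qed
  have act: "\<exists>a. (\<Sum>s1\<in>{1..Suc S}. W \<beta> s a s1 * v s1) \<le> v s" if s: "s \<in> {1..Suc S}" for s
  proof -
    define P where "P a N \<longleftrightarrow> (\<Sum>s1\<in>{1..Suc S}. W \<beta> s a s1 * u N s1) \<le> v s" for a N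
    have allN: "\<exists>a. P a N" for N
    proof -
      obtain a where a: "Top \<beta> (u N) s = (\<Sum>s1\<in>{1..Suc S}. W \<beta> s a s1 * u N s1)" using Top_ex by blast
      have "Top \<beta> (u N) s \<le> v s" using Tu[OF s, of N] u_le_v[OF s, of "Suc N"] by simp
      then show ?thesis using a unfolding P_def by auto
    qed
    have "\<exists>a. \<forall>N. \<exists>N'\<ge>N. P a N'"
    proof (rule ccontr)
      assume "\<not> (\<exists>a. \<forall>N. \<exists>N'\<ge>N. P a N')"
      then have "\<forall>a. \<exists>N. \<forall>N'\<ge>N. \<not> P a N'" by auto
      then obtain Nf where Nf: "\<And>a N'. Nf a \<le> N' \<Longrightarrow> \<not> P a N'" by metis
      define M where "M = Max (range Nf)"
      have "Nf a \<le> M" for a unfolding M_def by (rule Max_ge) auto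
      then show False using allN[of M] Nf by blast
    qed
    then obtain a where a: "\<forall>N. \<exists>N'\<ge>N. P a N'" by blast
    have "(\<Sum>s1\<in>{1..Suc S}. W \<beta> s a s1 * u N s1) \<le> v s" for N
    proof -
      obtain N' where N': "N \<le> N'" "P a N'" using a by blast
      have "(\<Sum>s1\<in>{1..Suc S}. W \<beta> s a s1 * u N s1) \<le> (\<Sum>s1\<in>{1..Suc S}. W \<beta> s a s1 * u N' s1)"
        using W_nn[OF s] u_mono N'(1) by (intro sum_mono mult_left_mono) auto
      then show ?thesis using N'(2) unfolding P_def by simp
    qed
    moreover have "(\<lambda>N. \<Sum>s1\<in>{1..Suc S}. W \<beta> s a s1 * u N s1) \<longlonglongrightarrow> (\<Sum>s1\<in>{1..Suc S}. W \<beta> s a s1 * v s1)"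
      by (rule tendsto_sum) (rule tendsto_mult[OF tendsto_const uv], simp)
    ultimately have "(\<Sum>s1\<in>{1..Suc S}. W \<beta> s a s1 * v s1) \<le> v s" by (intro LIMSEQ_le_const2) auto
    then show ?thesis by auto
  qed
  define d where "d s = (SOME a. (\<Sum>s1\<in>{1..Suc S}. W \<beta> s a s1 * v s1) \<le> v s)" for s
  have "(\<Sum>s1\<in>{1..Suc S}. W \<beta> s (d s) s1 * v s1) \<le> v s" if "s \<in> {1..Suc S}" for s
    unfolding d_def using act[OF that] by (rule someI_ex)
  then show ?thesis using v_nn v_sink vL by blast
qed

end

context mdpm begin

lemma Phi_e_le_v:
  assumes v: "\<forall>s\<in>{1..Suc S}. 0 \<le> v s" "v (Suc S) = 1"
    and d: "\<forall>s\<in>{1..Suc S}. (\<Sum>s1\<in>{1..Suc S}. W \<beta> s (d s) s1 * v s1) \<le> v s"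
  shows "s \<in> {1..Suc S} \<Longrightarrow> Phi \<beta> inde n (sd_policy d) s \<le> v s"
proof (induction n arbitrary: s)
  case 0 then show ?case using v by (auto simp: Phi_0 inde_def)
next
  case (Suc n)
  have "Phi \<beta> inde (Suc n) (sd_policy d) s = (\<Sum>s1\<in>{1..Suc S}. W \<beta> s (d s) s1 * Phi \<beta> inde n (sd_policy d) s1)"
    by (rule Phi_Suc_sd[OF Suc.prems])
  also have "\<dots> \<le> (\<Sum>s1\<in>{1..Suc S}. W \<beta> s (d s) s1 * v s1)"
    using Suc.IH W_nn[OF Suc.prems] by (intro sum_mono mult_left_mono) auto
  also have "\<dots> \<le> v s" using d Suc.prems by auto
  finally show ?case .
qed

lemma sd_upper:
  assumes v: "\<forall>s\<in>{1..Suc S}. 0 \<le> v s" "v (Suc S) = 1"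
    and d: "\<forall>s\<in>{1..Suc S}. (\<Sum>s1\<in>{1..Suc S}. W \<beta> s (d s) s1 * v s1) \<le> v s"
    and eta: "0 < \<eta>"
  shows "eventually (\<lambda>n. Am \<beta> n (sd_policy d) < (\<Sum>s\<in>{1..Suc S}. \<mu> s * v s) + \<eta>) sequentially"
proof -
  obtain K c where Kc: "0 < K" "0 < c" "c \<le> 1" "\<forall>\<pi>\<in>HR_policies. \<forall>s\<in>{1..Suc S}. c \<le> Phi \<beta> inde K \<pi> s"
    using absorb[of \<beta>] by blast
  define V where "V = (\<Sum>s\<in>{1..Suc S}. \<mu> s * v s)"
  define B where "B n = (\<Sum>s\<in>{1..Suc S}. \<mu> s * Phi \<beta> inde n (sd_policy d) s)" for n
  define C where "C n = (\<Sum>s\<in>{1..Suc S}. \<mu> s * Phi \<beta> indT n (sd_policy d) s)" for n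
  have AB: "Am \<beta> n (sd_policy d) = C n + B n" for n unfolding Am_split B_def C_def ..
  have incB: "incseq B"
  proof (rule incseq_SucI)
    fix n show "B n \<le> B (Suc n)" unfolding B_def
      using mu_nn Phi_e_mono1[OF sd_HR] by (intro sum_mono mult_left_mono) auto
  qed
  have BV: "B n \<le> V" for n unfolding B_def V_def
    using mu_nn Phi_e_le_v[OF v d] by (intro sum_mono mult_left_mono) auto
  have C0: "0 \<le> C n" for n unfolding C_def
    using mu_nn Phi_nn[OF sd_HR, of _ indT] by (intro sum_nonneg mult_nonneg_nonneg) (auto simp: indT_def)
  have CB: "C n \<le> (1/c) * (B (n+K) - B n)" for n
  proof -
    have "C n \<le> (\<Sum>s\<in>{1..Suc S}. \<mu> s * ((1/c) * (Phi \<beta> inde (n+K) (sd_policy d) s - Phi \<beta> inde n (sd_policy d) s)))"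
      unfolding C_def using mu_nn BC[OF Kc(2) Kc(4) sd_HR] by (intro sum_mono mult_left_mono) auto
    also have "\<dots> = (1/c) * (B (n+K) - B n)" unfolding B_def
      by (simp add: sum_distrib_left sum_subtractf right_diff_distrib mult.left_commute)
    finally show ?thesis .
  qed
  have "bdd_above (range B)" using BV by (auto simp: bdd_above_def)
  then have BL: "B \<longlonglongrightarrow> (SUP n. B n)" using incB by (rule LIMSEQ_incseq_SUP)
  then have "(\<lambda>n. B (n+K)) \<longlonglongrightarrow> (SUP n. B n)" by (rule LIMSEQ_ignore_initial_segment)
  then have "(\<lambda>n. (1/c) * (B (n+K) - B n)) \<longlonglongrightarrow> (1/c) * ((SUP n. B n) - (SUP n. B n))"
    by (intro tendsto_mult[OF tendsto_const] tendsto_diff BL)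
  then have lim0: "(\<lambda>n. (1/c) * (B (n+K) - B n)) \<longlonglongrightarrow> 0" by simp
  have e1: "eventually (\<lambda>n. 0 \<le> C n) sequentially" using C0 by simp
  have e2: "eventually (\<lambda>n. C n \<le> (1/c) * (B (n+K) - B n)) sequentially" using CB by simp
  have "C \<longlonglongrightarrow> 0" by (rule tendsto_sandwich[OF e1 e2 tendsto_const lim0])
  then have "eventually (\<lambda>n. C n < \<eta>) sequentially" using eta by (rule order_tendstoD(2))
  then show ?thesis
  proof (rule eventually_mono)
    fix n assume "C n < \<eta>"
    then show "Am \<beta> n (sd_policy d) < (\<Sum>s\<in>{1..Suc S}. \<mu> s * v s) + \<eta>"
      using AB[of n] BV[of n] unfolding V_def by simp
  qed
qed

lemma Klemma0:
  assumes b: "0 < \<beta>"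
  shows "\<exists>d. limsup (\<lambda>t. ereal (- (1/\<beta>) * ln (an \<beta> (Suc t))))
          \<le> liminf (\<lambda>t. ereal (erm p S (sd_policy d) \<mu> (Suc t) \<beta> (ret r (Suc t))))"
proof (cases "liminf (\<lambda>n. ereal (an \<beta> n)) = \<infinity>")
  case True
  have H: "limsup (\<lambda>t. ereal (- (1/\<beta>) * ln (an \<beta> (Suc t)))) \<le> ereal w" for w
  proof (rule Limsup_bounded)
    have "ereal (exp (- \<beta> * w)) < liminf (\<lambda>n. ereal (an \<beta> n))" using True by simp
    then have "eventually (\<lambda>n. ereal (exp (- \<beta> * w)) < ereal (an \<beta> n)) sequentially" by (rule less_LiminfD)
    then have "eventually (\<lambda>t. exp (- \<beta> * w) < an \<beta> (Suc t)) sequentially"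
      using eventually_sequentially_Suc[of "\<lambda>n. exp (- \<beta> * w) < an \<beta> n"] by simp
    then show "eventually (\<lambda>t. ereal (- (1/\<beta>) * ln (an \<beta> (Suc t))) \<le> ereal w) sequentially"
    proof (rule eventually_mono)
      fix t assume "exp (- \<beta> * w) < an \<beta> (Suc t)"
      then have "ln (exp (- \<beta> * w)) < ln (an \<beta> (Suc t))" using an_pos by (subst ln_less_cancel_iff) auto
      then have "- \<beta> * w < ln (an \<beta> (Suc t))" by simp
      then show "ereal (- (1/\<beta>) * ln (an \<beta> (Suc t))) \<le> ereal w" using b by (simp add: field_simps)
    qed
  qed
  have H2: "limsup (\<lambda>t. ereal (- (1/\<beta>) * ln (an \<beta> (Suc t)))) \<le> z" for z
    by (rule ereal_le_real) (rule H)
  show ?thesis by (rule exI, rule H2)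
next
  case False
  have "\<forall>n. 0 \<le> ereal (an \<beta> n)" using an_pos by (auto intro: less_imp_le)
  then have "0 \<le> liminf (\<lambda>n. ereal (an \<beta> n))"
    by (intro Liminf_bounded always_eventually)
  with False obtain L where L: "liminf (\<lambda>n. ereal (an \<beta> n)) = ereal L"
    by (cases "liminf (\<lambda>n. ereal (an \<beta> n))") auto
  obtain v d where v: "\<forall>s\<in>{1..Suc S}. 0 \<le> v s" "v (Suc S) = 1" "(\<Sum>s\<in>{1..Suc S}. \<mu> s * v s) \<le> L"
    and d: "\<forall>s\<in>{1..Suc S}. (\<Sum>s1\<in>{1..Suc S}. W \<beta> s (d s) s1 * v s1) \<le> v s"
    using super_exists[OF L] by blast
  define V where "V = (\<Sum>s\<in>{1..Suc S}. \<mu> s * v s)"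
  obtain Bb where Bb: "\<forall>\<pi>\<in>HR_policies. \<forall>n. \<bar>Em n \<pi>\<bar> \<le> Bb" using Em_bound0 by blast
  have lb: "exp (- \<beta> * Bb) \<le> Am \<beta> n (sd_policy d)" for n
    using Am_lb[OF sd_HR b] Bb sd_HR by blast
  have Vpos: "exp (- \<beta> * Bb) \<le> V"
  proof (rule ccontr)
    assume "\<not> exp (- \<beta> * Bb) \<le> V"
    then have "0 < exp (- \<beta> * Bb) - V" by simp
    from sd_upper[OF v(1,2) d this] have "eventually (\<lambda>n. Am \<beta> n (sd_policy d) < V + (exp (- \<beta> * Bb) - V)) sequentially"
      unfolding V_def .
    then obtain n where "Am \<beta> n (sd_policy d) < exp (- \<beta> * Bb)" by (auto simp: eventually_sequentially)
    then show False using lb[of n] by simp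
  qed
  have Lpos: "0 < L" using Vpos v(3) exp_gt_zero[of "- \<beta> * Bb"] unfolding V_def by linarith
  have VL: "V \<le> L" using v(3) unfolding V_def .
  show ?thesis
  proof (rule exI[of _ d], rule ereal_le_epsilon2)
    fix \<epsilon> :: real assume e: "0 < \<epsilon>"
    define \<theta> where "\<theta> = exp (- \<beta> * \<epsilon> / 2)"
    have th: "0 < \<theta>" "\<theta> < 1" unfolding \<theta>_def using b e by auto
    define c0 where "c0 = - (1/\<beta>) * ln L"
    have up: "limsup (\<lambda>t. ereal (- (1/\<beta>) * ln (an \<beta> (Suc t)))) \<le> ereal (c0 + \<epsilon>/2)"
    proof (rule Limsup_bounded)
      have "ereal (L * \<theta>) < liminf (\<lambda>n. ereal (an \<beta> n))" using L Lpos th by simp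
      then have "eventually (\<lambda>n. ereal (L * \<theta>) < ereal (an \<beta> n)) sequentially" by (rule less_LiminfD)
      then have "eventually (\<lambda>t. L * \<theta> < an \<beta> (Suc t)) sequentially"
        using eventually_sequentially_Suc[of "\<lambda>n. L * \<theta> < an \<beta> n"] by simp
      then show "eventually (\<lambda>t. ereal (- (1/\<beta>) * ln (an \<beta> (Suc t))) \<le> ereal (c0 + \<epsilon>/2)) sequentially"
      proof (rule eventually_mono)
        fix t assume a: "L * \<theta> < an \<beta> (Suc t)"
        have "ln (L * \<theta>) < ln (an \<beta> (Suc t))" using a Lpos th an_pos by (subst ln_less_cancel_iff) auto
        moreover have "ln (L * \<theta>) = ln L - \<beta> * \<epsilon> / 2" using Lpos th unfolding \<theta>_def by (simp add: ln_mult)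
        ultimately have "ln L - \<beta> * \<epsilon> / 2 < ln (an \<beta> (Suc t))" by simp
        then show "ereal (- (1/\<beta>) * ln (an \<beta> (Suc t))) \<le> ereal (c0 + \<epsilon>/2)"
          unfolding c0_def using b by (simp add: field_simps)
      qed
    qed
    have lo: "ereal (c0 - \<epsilon>/2) \<le> liminf (\<lambda>t. ereal (erm p S (sd_policy d) \<mu> (Suc t) \<beta> (ret r (Suc t))))"
    proof (rule Liminf_bounded)
      have "L * \<theta> < L * 1" using th Lpos by (intro mult_strict_left_mono) auto
      then have "L < L / \<theta>" using th by (simp add: less_divide_eq)
      then have "0 < L / \<theta> - V" using VL by linarith
      from sd_upper[OF v(1,2) d this] have "eventually (\<lambda>n. Am \<beta> n (sd_policy d) < L / \<theta>) sequentially"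
        unfolding V_def by simp
      then have "eventually (\<lambda>t. Am \<beta> (Suc t) (sd_policy d) < L / \<theta>) sequentially"
        using eventually_sequentially_Suc[of "\<lambda>n. Am \<beta> n (sd_policy d) < L / \<theta>"] by simp
      then show "eventually (\<lambda>t. ereal (c0 - \<epsilon>/2) \<le> ereal (erm p S (sd_policy d) \<mu> (Suc t) \<beta> (ret r (Suc t)))) sequentially"
      proof (rule eventually_mono)
        fix t assume a: "Am \<beta> (Suc t) (sd_policy d) < L / \<theta>"
        have pos: "0 < Am \<beta> (Suc t) (sd_policy d)" using lb[of "Suc t"] exp_gt_zero[of "- \<beta> * Bb"] by linarith
        have "ln (Am \<beta> (Suc t) (sd_policy d)) < ln (L / \<theta>)" using a pos by (subst ln_less_cancel_iff) auto
        moreover have "ln (L / \<theta>) = ln L + \<beta> * \<epsilon> / 2" using Lpos th unfolding \<theta>_def by (simp add: ln_div)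
        ultimately have "ln (Am \<beta> (Suc t) (sd_policy d)) < ln L + \<beta> * \<epsilon> / 2" by simp
        then have "- (1/\<beta>) * (ln L + \<beta> * \<epsilon> / 2) \<le> - (1/\<beta>) * ln (Am \<beta> (Suc t) (sd_policy d))"
          using b by (intro mult_left_mono_neg) auto
        moreover have "- (1/\<beta>) * (ln L + \<beta> * \<epsilon> / 2) = c0 - \<epsilon>/2"
          unfolding c0_def using b by (simp add: field_simps)
        ultimately show "ereal (c0 - \<epsilon>/2) \<le> ereal (erm p S (sd_policy d) \<mu> (Suc t) \<beta> (ret r (Suc t)))"
          unfolding erm_Am[OF b] by simp
      qed
    qed
    have "ereal (c0 + \<epsilon>/2) = ereal (c0 - \<epsilon>/2) + ereal \<epsilon>" by simp
    also have "\<dots> \<le> liminf (\<lambda>t. ereal (erm p S (sd_policy d) \<mu> (Suc t) \<beta> (ret r (Suc t)))) + ereal \<epsilon>"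
      using lo by (intro add_right_mono)
    finally show "limsup (\<lambda>t. ereal (- (1/\<beta>) * ln (an \<beta> (Suc t))))
          \<le> liminf (\<lambda>t. ereal (erm p S (sd_policy d) \<mu> (Suc t) \<beta> (ret r (Suc t)))) + ereal \<epsilon>"
      using up by simp
  qed
qed

end

context mdpm begin

lemma g_t_erm: "g_t p r S \<mu> \<pi> \<beta> t = erm p S \<pi> \<mu> (Suc t) \<beta> (ret r (Suc t))"
  unfolding g_t_def ..

lemma g_t_0: "g_t p r S \<mu> \<pi> 0 t = Em (Suc t) \<pi>"
  unfolding g_t_def erm_def Em_def by simp

lemma g_le_g0: "\<pi> \<in> HR_policies \<Longrightarrow> 0 \<le> \<beta> \<Longrightarrow> g_t p r S \<mu> \<pi> \<beta> t \<le> g_t p r S \<mu> \<pi> 0 t"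
  unfolding g_t_def by (rule erm_mono) auto

lemma g_ub: obtains B where "\<And>\<pi> \<beta> t. \<pi> \<in> HR_policies \<Longrightarrow> 0 \<le> \<beta> \<Longrightarrow> g_t p r S \<mu> \<pi> \<beta> t \<le> B"
proof -
  obtain B where B: "\<forall>\<pi>\<in>HR_policies. \<forall>n. \<bar>Em n \<pi>\<bar> \<le> B" using Em_bound0 by blast
  have "g_t p r S \<mu> \<pi> \<beta> t \<le> B" if "\<pi> \<in> HR_policies" "0 \<le> \<beta>" for \<pi> \<beta> t
  proof -
    have "g_t p r S \<mu> \<pi> \<beta> t \<le> g_t p r S \<mu> \<pi> 0 t" using g_le_g0[OF that] .
    also have "\<dots> \<le> B" unfolding g_t_0 using B that(1) by (auto simp: abs_le_iff)
    finally show ?thesis .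
  qed
  then show ?thesis using that by blast
qed

lemma g_le_phi: assumes "\<pi> \<in> HR_policies" "0 < \<beta>"
  shows "g_t p r S \<mu> \<pi> \<beta> t \<le> - (1/\<beta>) * ln (an \<beta> (Suc t))"
proof -
  have "ln (an \<beta> (Suc t)) \<le> ln (Am \<beta> (Suc t) \<pi>)"
    using an_pos[of \<beta> "Suc t"] an_le_Am[OF assms(1), of \<beta> "Suc t"] by (subst ln_le_cancel_iff) auto
  then have "- (1/\<beta>) * ln (Am \<beta> (Suc t) \<pi>) \<le> - (1/\<beta>) * ln (an \<beta> (Suc t))"
    using assms(2) by (intro mult_left_mono_neg) auto
  then show ?thesis unfolding g_t_erm erm_Am[OF assms(2)] .
qed

lemma gstar_le_phi: assumes "0 < \<beta>"
  shows "gstar_t p r S \<mu> \<beta> t \<le> - (1/\<beta>) * ln (an \<beta> (Suc t))"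
  unfolding gstar_t_def using g_le_phi[OF _ assms] sd_HR by (intro cSup_least) auto

lemma gstar_ge: assumes "\<pi> \<in> HR_policies" "0 \<le> \<beta>"
  shows "g_t p r S \<mu> \<pi> \<beta> t \<le> gstar_t p r S \<mu> \<beta> t"
proof -
  obtain B where B: "\<And>\<pi> \<beta> t. \<pi> \<in> HR_policies \<Longrightarrow> 0 \<le> \<beta> \<Longrightarrow> g_t p r S \<mu> \<pi> \<beta> t \<le> B" using g_ub by blast
  have "bdd_above ((\<lambda>\<pi>. g_t p r S \<mu> \<pi> \<beta> t) ` HR_policies)" using B assms(2) by (intro bdd_aboveI[of _ B]) auto
  then show ?thesis unfolding gstar_t_def using assms(1) by (intro cSup_upper) auto
qed

lemma K_policy: assumes b: "0 < \<beta>"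
  shows "\<exists>d. (\<forall>\<pi>\<in>HR_policies. limsup (\<lambda>t. ereal (g_t p r S \<mu> \<pi> \<beta> t)) \<le> g_inf p r S \<mu> (sd_policy d) \<beta>)
           \<and> gstar_inf p r S \<mu> \<beta> \<le> g_inf p r S \<mu> (sd_policy d) \<beta>"
proof -
  obtain d where d: "limsup (\<lambda>t. ereal (- (1/\<beta>) * ln (an \<beta> (Suc t))))
          \<le> liminf (\<lambda>t. ereal (erm p S (sd_policy d) \<mu> (Suc t) \<beta> (ret r (Suc t))))"
    using Klemma0[OF b] by blast
  have gi: "g_inf p r S \<mu> (sd_policy d) \<beta> = liminf (\<lambda>t. ereal (erm p S (sd_policy d) \<mu> (Suc t) \<beta> (ret r (Suc t))))"
    unfolding g_inf_def g_t_erm ..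
  have A: "limsup (\<lambda>t. ereal (g_t p r S \<mu> \<pi> \<beta> t)) \<le> g_inf p r S \<mu> (sd_policy d) \<beta>" if "\<pi> \<in> HR_policies" for \<pi>
  proof -
    have "limsup (\<lambda>t. ereal (g_t p r S \<mu> \<pi> \<beta> t)) \<le> limsup (\<lambda>t. ereal (- (1/\<beta>) * ln (an \<beta> (Suc t))))"
      using g_le_phi[OF that b] by (intro Limsup_mono always_eventually) auto
    then show ?thesis using d gi by simp
  qed
  have "gstar_inf p r S \<mu> \<beta> \<le> liminf (\<lambda>t. ereal (- (1/\<beta>) * ln (an \<beta> (Suc t))))"
    unfolding gstar_inf_def using gstar_le_phi[OF b] by (intro Liminf_mono always_eventually) auto
  also have "\<dots> \<le> limsup (\<lambda>t. ereal (- (1/\<beta>) * ln (an \<beta> (Suc t))))" by (rule Liminf_le_Limsup) simp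
  finally have "gstar_inf p r S \<mu> \<beta> \<le> g_inf p r S \<mu> (sd_policy d) \<beta>" using d gi by simp
  then show ?thesis using A by blast
qed

lemma h_bdd: assumes "\<pi> \<in> HR_policies" "0 < \<alpha>" "\<alpha> < 1"
  shows "bdd_above ((\<lambda>\<beta>. h_t p r S \<mu> \<alpha> \<pi> \<beta> t) ` {0<..})"
proof -
  have "h_t p r S \<mu> \<alpha> \<pi> \<beta> t \<le> g_t p r S \<mu> \<pi> 0 t" if "0 < \<beta>" for \<beta>
  proof -
    have "ln \<alpha> / \<beta> < 0" using assms that by (simp add: divide_neg_pos)
    then show ?thesis unfolding h_t_def using g_le_g0[OF assms(1), of \<beta> t] that by simp
  qed
  then show ?thesis by (intro bdd_aboveI[of _ "g_t p r S \<mu> \<pi> 0 t"]) auto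
qed

lemma conv_h: assumes \<pi>: "\<pi> \<in> HR_policies" and a: "0 < \<alpha>" "\<alpha> < 1"
  shows "convergent (\<lambda>t. ereal (Sup ((\<lambda>\<beta>. h_t p r S \<mu> \<alpha> \<pi> \<beta> t) ` {0<..})))"
proof -
  have eq: "(\<lambda>\<beta>. h_t p r S \<mu> \<alpha> \<pi> \<beta> t) = (\<lambda>\<beta>. g_t p r S \<mu> \<pi> \<beta> t + ln \<alpha> / \<beta>)" for t
    unfolding h_t_def ..
  have "convergent (\<lambda>t. ereal (Sup ((\<lambda>\<beta>. g_t p r S \<mu> \<pi> \<beta> t + ln \<alpha> / \<beta>) ` {0<..})))"
  proof (rule evar_conv_abs[OF a])
    fix t and x y :: real assume "0 \<le> x" "x \<le> y"
    then show "g_t p r S \<mu> \<pi> y t \<le> g_t p r S \<mu> \<pi> x t" unfolding g_t_def by (intro erm_mono[OF \<pi>])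
  next
    fix \<beta> :: real assume "0 < \<beta>"
    then show "convergent (\<lambda>t. ereal (g_t p r S \<mu> \<pi> \<beta> t))" unfolding g_t_def by (rule erm_conv[OF \<pi>])
  next
    obtain L where "(\<lambda>n. Em n \<pi>) \<longlonglongrightarrow> L" using Em_conv[OF \<pi>] by (auto simp: convergent_def)
    then have "(\<lambda>t. Em (Suc t) \<pi>) \<longlonglongrightarrow> L" by (rule LIMSEQ_Suc)
    then show "convergent (\<lambda>t. g_t p r S \<mu> \<pi> 0 t)" unfolding g_t_0 by (auto simp: convergent_def)
  qed
  then show ?thesis unfolding eq .
qed

lemma main_ineq:
  fixes dstar :: "nat \<Rightarrow> 'a"
  assumes a: "0 < \<alpha>" "\<alpha> < 1" and dl: "0 < \<delta>" and b0: "0 < \<beta>0" "\<beta>0 < - ln \<alpha> / \<delta>"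
    and gap: "gstar_inf p r S \<mu> 0 - gstar_inf p r S \<mu> \<beta>0 \<le> ereal \<delta>"
    and star_max: "\<forall>d::nat \<Rightarrow> 'a. \<forall>\<beta>\<in>beta_grid \<alpha> \<beta>0 \<delta>.
                      h_inf p r S \<mu> \<alpha> (sd_policy d) \<beta> \<le> h_inf p r S \<mu> \<alpha> (sd_policy dstar) \<beta>star"
    and \<pi>: "\<pi> \<in> HR_policies"
  shows "lim (\<lambda>t. ereal (Sup ((\<lambda>\<beta>. h_t p r S \<mu> \<alpha> \<pi> \<beta> t) ` {0<..}))) \<le> h_inf p r S \<mu> \<alpha> (sd_policy dstar) \<beta>star + ereal \<delta>"
proof -
  define H where "H = h_inf p r S \<mu> \<alpha> (sd_policy dstar) \<beta>star"
  define X where "X t = Sup ((\<lambda>\<beta>. h_t p r S \<mu> \<alpha> \<pi> \<beta> t) ` {0<..})" for t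
  define G where "G = beta_grid \<alpha> \<beta>0 \<delta>"
  have finG: "finite G" unfolding G_def by (rule grid_finite[OF a dl])
  have Gpos: "\<gamma> \<in> G \<Longrightarrow> 0 < \<gamma>" for \<gamma> unfolding G_def by (rule grid_pos[OF a dl])
  have b0G: "\<beta>0 \<in> G" unfolding G_def by (rule grid_mem0[OF b0])
  have conv: "convergent (\<lambda>t. ereal (X t))" unfolding X_def by (rule conv_h[OF \<pi> a])
  have limX: "lim (\<lambda>t. ereal (X t)) = limsup (\<lambda>t. ereal (X t))"
    using conv by (simp add: convergent_LIMSEQ_iff lim_imp_Limsup)
  have grid_bound: "limsup (\<lambda>t. ereal (g_t p r S \<mu> \<pi> \<gamma> t)) + ereal (ln \<alpha> / \<gamma>) \<le> H" if gG0: "\<gamma> \<in> G" for \<gamma>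
  proof -
    obtain d where d: "\<forall>\<pi>\<in>HR_policies. limsup (\<lambda>t. ereal (g_t p r S \<mu> \<pi> \<gamma> t)) \<le> g_inf p r S \<mu> (sd_policy d) \<gamma>"
      using K_policy[OF Gpos[OF gG0]] by blast
    have "limsup (\<lambda>t. ereal (g_t p r S \<mu> \<pi> \<gamma> t)) + ereal (ln \<alpha> / \<gamma>) \<le> g_inf p r S \<mu> (sd_policy d) \<gamma> + ereal (ln \<alpha> / \<gamma>)"
      using d \<pi> by (intro add_right_mono) auto
    also have "\<dots> = h_inf p r S \<mu> \<alpha> (sd_policy d) \<gamma>" unfolding h_inf_def ..
    also have "\<dots> \<le> H" unfolding H_def using star_max gG0 unfolding G_def by blast
    finally show ?thesis .
  qed
  obtain G0 where G0: "(\<lambda>t. g_t p r S \<mu> \<pi> 0 t) \<longlonglongrightarrow> G0"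
  proof -
    obtain L where "(\<lambda>n. Em n \<pi>) \<longlonglongrightarrow> L" using Em_conv[OF \<pi>] by (auto simp: convergent_def)
    then have "(\<lambda>t. Em (Suc t) \<pi>) \<longlonglongrightarrow> L" by (rule LIMSEQ_Suc)
    then show ?thesis using that unfolding g_t_0 by blast
  qed
  have G0le: "ereal G0 \<le> gstar_inf p r S \<mu> 0"
  proof -
    have "ereal G0 = liminf (\<lambda>t. ereal (g_t p r S \<mu> \<pi> 0 t))"
      using lim_imp_Liminf[OF trivial_limit_sequentially] G0 by (metis tendsto_ereal)
    also have "\<dots> \<le> gstar_inf p r S \<mu> 0" unfolding gstar_inf_def
      using gstar_ge[OF \<pi>] by (intro Liminf_mono always_eventually) auto
    finally show ?thesis .
  qed
  have gap': "gstar_inf p r S \<mu> 0 \<le> gstar_inf p r S \<mu> \<beta>0 + ereal \<delta>"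
    using gap by (cases "gstar_inf p r S \<mu> 0"; cases "gstar_inf p r S \<mu> \<beta>0") auto
  obtain d0 where d0: "gstar_inf p r S \<mu> \<beta>0 \<le> g_inf p r S \<mu> (sd_policy d0) \<beta>0"
    using K_policy[OF b0(1)] by blast
  have zero_bound: "ereal G0 + ereal (ln \<alpha> / \<beta>0) \<le> H + ereal \<delta>"
  proof -
    have "ereal G0 + ereal (ln \<alpha> / \<beta>0) \<le> (g_inf p r S \<mu> (sd_policy d0) \<beta>0 + ereal \<delta>) + ereal (ln \<alpha> / \<beta>0)"
      using G0le gap' d0 by (intro add_right_mono) (meson add_right_mono order_trans)
    also have "\<dots> = h_inf p r S \<mu> \<alpha> (sd_policy d0) \<beta>0 + ereal \<delta>"
      unfolding h_inf_def by (simp add: ac_simps)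
    also have "\<dots> \<le> H + ereal \<delta>" unfolding H_def using star_max b0G unfolding G_def
      by (intro add_right_mono) blast
    finally show ?thesis .
  qed
  have "limsup (\<lambda>t. ereal (X t)) \<le> H + ereal \<delta>"
  proof (rule ereal_le_real)
    fix z assume z: "H + ereal \<delta> \<le> ereal z"
    show "limsup (\<lambda>t. ereal (X t)) \<le> ereal z"
    proof (rule ereal_le_epsilon2)
      fix \<epsilon> :: real assume e: "0 < \<epsilon>"
      define w where "w = z + \<epsilon>"
      have Hw: "H + ereal \<delta> < ereal w" using z e unfolding w_def
        by (cases H) auto
      have ev1: "eventually (\<lambda>t. \<forall>\<gamma>\<in>G. g_t p r S \<mu> \<pi> \<gamma> t + ln \<alpha> / \<gamma> + \<delta> < w) sequentially"
      proof (rule eventually_ball_finite[OF finG], rule ballI)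
        fix \<gamma> assume gG: "\<gamma> \<in> G"
        have "limsup (\<lambda>t. ereal (g_t p r S \<mu> \<pi> \<gamma> t)) < ereal (w - \<delta> - ln \<alpha> / \<gamma>)"
          using grid_bound[OF gG] Hw
          by (cases "limsup (\<lambda>t. ereal (g_t p r S \<mu> \<pi> \<gamma> t))"; cases H) auto
        then have "eventually (\<lambda>t. ereal (g_t p r S \<mu> \<pi> \<gamma> t) < ereal (w - \<delta> - ln \<alpha> / \<gamma>)) sequentially"
          by (rule Limsup_lessD)
        then show "eventually (\<lambda>t. g_t p r S \<mu> \<pi> \<gamma> t + ln \<alpha> / \<gamma> + \<delta> < w) sequentially"
          by eventually_elim simp
      qed
      have "G0 + ln \<alpha> / \<beta>0 < w" using zero_bound Hw by (cases H) auto
      moreover have "(\<lambda>t. g_t p r S \<mu> \<pi> 0 t + ln \<alpha> / \<beta>0) \<longlonglongrightarrow> G0 + ln \<alpha> / \<beta>0"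
        using G0 by (rule tendsto_add) simp
      ultimately have ev2: "eventually (\<lambda>t. g_t p r S \<mu> \<pi> 0 t + ln \<alpha> / \<beta>0 < w) sequentially"
        by (simp add: order_tendstoD(2))
      have "eventually (\<lambda>t. ereal (X t) \<le> ereal w) sequentially"
        using ev1 ev2
      proof eventually_elim
        case (elim t)
        have "X t \<le> w" unfolding X_def
        proof (rule cSup_least)
          show "(\<lambda>\<beta>. h_t p r S \<mu> \<alpha> \<pi> \<beta> t) ` {0<..} \<noteq> {}" by auto
        next
          fix y assume "y \<in> (\<lambda>\<beta>. h_t p r S \<mu> \<alpha> \<pi> \<beta> t) ` {0<..}"
          then obtain \<beta> :: real where b: "0 < \<beta>" "y = h_t p r S \<mu> \<alpha> \<pi> \<beta> t" by auto
          have mono: "\<And>x y. 0 \<le> x \<Longrightarrow> x \<le> y \<Longrightarrow> g_t p r S \<mu> \<pi> y t \<le> g_t p r S \<mu> \<pi> x t"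
            unfolding g_t_def by (intro erm_mono[OF \<pi>])
          have "g_t p r S \<mu> \<pi> \<beta> t + ln \<alpha> / \<beta> \<le> g_t p r S \<mu> \<pi> 0 t + ln \<alpha> / \<beta>0 \<or>
              (\<exists>\<gamma>\<in>beta_grid \<alpha> \<beta>0 \<delta>. g_t p r S \<mu> \<pi> \<beta> t + ln \<alpha> / \<beta> \<le> g_t p r S \<mu> \<pi> \<gamma> t + ln \<alpha> / \<gamma> + \<delta>)"
            by (rule grid_point[OF a dl b0 mono b(1)])
          then show "y \<le> w" using elim b(2) unfolding h_t_def G_def by force
        qed
        then show ?case by simp
      qed
      then have "limsup (\<lambda>t. ereal (X t)) \<le> ereal w" by (rule Limsup_bounded)
      then show "limsup (\<lambda>t. ereal (X t)) \<le> ereal z + ereal \<epsilon>" unfolding w_def by simp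
    qed
  qed
  then show ?thesis using limX unfolding X_def H_def by simp
qed

end


theorem theorem3:
  fixes p :: "nat \<Rightarrow> 'a::finite \<Rightarrow> nat \<Rightarrow> real"
    and r :: "nat \<Rightarrow> 'a \<Rightarrow> nat \<Rightarrow> real"
    and \<mu> :: "nat \<Rightarrow> real"
    and S :: nat
    and \<alpha> \<delta> \<beta>0 \<beta>star :: real
    and dstar :: "nat \<Rightarrow> 'a"
  assumes alpha: "0 < \<alpha>" "\<alpha> < 1"
    and p_nonneg: "\<forall>s\<in>{1..Suc S}. \<forall>a. \<forall>s'\<in>{1..Suc S}. 0 \<le> p s a s'"
    and p_sum: "\<forall>s\<in>{1..Suc S}. \<forall>a. (\<Sum>s'\<in>{1..Suc S}. p s a s') = 1"
    and sink_p: "\<forall>a. p (Suc S) a (Suc S) = 1"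
    and sink_r: "\<forall>a. r (Suc S) a (Suc S) = 0"
    and mu_pos: "\<forall>s\<in>{1..S}. 0 < \<mu> s"
    and mu_sink: "\<mu> (Suc S) = 0"
    and mu_sum: "(\<Sum>s\<in>{1..S}. \<mu> s) = 1"
    and trans: "transient p S"
    and delta: "0 < \<delta>"
    and beta0: "0 < \<beta>0" "\<beta>0 < - ln \<alpha> / \<delta>"
    and gap: "gstar_inf p r S \<mu> 0 - gstar_inf p r S \<mu> \<beta>0 \<le> ereal \<delta>"
    and star_grid: "\<beta>star \<in> beta_grid \<alpha> \<beta>0 \<delta>"
    and star_max: "\<forall>d::nat \<Rightarrow> 'a. \<forall>\<beta>\<in>beta_grid \<alpha> \<beta>0 \<delta>.
                      h_inf p r S \<mu> \<alpha> (sd_policy d) \<beta> \<le> h_inf p r S \<mu> \<alpha> (sd_policy dstar) \<beta>star"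
  shows "convergent (\<lambda>t. ereal (evar p S (sd_policy dstar) \<mu> (Suc t) \<alpha> (ret r (Suc t))))
       \<and> (\<forall>\<pi>\<in>HR_policies.
            convergent (\<lambda>t. ereal (Sup ((\<lambda>\<beta>. h_t p r S \<mu> \<alpha> \<pi> \<beta> t) ` {0<..}))))
       \<and> lim (\<lambda>t. ereal (evar p S (sd_policy dstar) \<mu> (Suc t) \<alpha> (ret r (Suc t))))
           \<ge> (SUP \<pi>\<in>HR_policies.
                 lim (\<lambda>t. ereal (Sup ((\<lambda>\<beta>. h_t p r S \<mu> \<alpha> \<pi> \<beta> t) ` {0<..}))))
             - ereal \<delta>"
proof -
  interpret M: mdpm p r S \<mu>
  proof (unfold_locales)
    show "\<forall>s\<in>{1..Suc S}. \<forall>a. \<forall>s'\<in>{1..Suc S}. 0 \<le> p s a s'" using p_nonneg .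
    show "\<forall>s\<in>{1..Suc S}. \<forall>a. (\<Sum>s'\<in>{1..Suc S}. p s a s') = 1" using p_sum .
    show "\<forall>a. p (Suc S) a (Suc S) = 1" using sink_p .
    show "\<forall>a. r (Suc S) a (Suc S) = 0" using sink_r .
    show "transient p S" using trans .
    show "\<forall>s\<in>{1..Suc S}. 0 \<le> \<mu> s"
    proof
      fix s assume s: "s \<in> {1..Suc S}"
      show "0 \<le> \<mu> s"
      proof (cases "s = Suc S")
        case True then show ?thesis using mu_sink by simp
      next
        case False then have "s \<in> {1..S}" using s by auto
        then show ?thesis using mu_pos by (auto intro: less_imp_le)
      qed
    qed
    show "(\<Sum>s\<in>{1..Suc S}. \<mu> s) = 1"
      using mu_sum mu_sink by (simp add: sum.cl_ivl_Suc)
    show "\<forall>s\<in>{1..S}. 0 < \<mu> s" using mu_pos .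
  qed
  have conv_all: "\<forall>\<pi>\<in>HR_policies. convergent (\<lambda>t. ereal (Sup ((\<lambda>\<beta>. h_t p r S \<mu> \<alpha> \<pi> \<beta> t) ` {0<..})))"
    using M.conv_h alpha by blast
  have evar_eq: "(\<lambda>t. ereal (evar p S (sd_policy dstar) \<mu> (Suc t) \<alpha> (ret r (Suc t))))
      = (\<lambda>t. ereal (Sup ((\<lambda>\<beta>. h_t p r S \<mu> \<alpha> (sd_policy dstar) \<beta> t) ` {0<..})))"
    unfolding evar_def h_t_def g_t_def ..
  have conv1: "convergent (\<lambda>t. ereal (evar p S (sd_policy dstar) \<mu> (Suc t) \<alpha> (ret r (Suc t))))"
    unfolding evar_eq using conv_all M.sd_HR by blast
  define H where "H = h_inf p r S \<mu> \<alpha> (sd_policy dstar) \<beta>star"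
  define Y where "Y = (\<lambda>t. ereal (evar p S (sd_policy dstar) \<mu> (Suc t) \<alpha> (ret r (Suc t))))"
  have bs: "0 < \<beta>star" using grid_pos[OF alpha delta star_grid] .
  have Yge: "ereal (g_t p r S \<mu> (sd_policy dstar) \<beta>star t) + ereal (ln \<alpha> / \<beta>star) \<le> Y t" for t
  proof -
    have "h_t p r S \<mu> \<alpha> (sd_policy dstar) \<beta>star t \<le> Sup ((\<lambda>\<beta>. h_t p r S \<mu> \<alpha> (sd_policy dstar) \<beta> t) ` {0<..})"
      using M.h_bdd[OF M.sd_HR alpha] bs by (intro cSup_upper) auto
    then show ?thesis unfolding Y_def evar_eq by (simp add: h_t_def)
  qed
  have "H = liminf (\<lambda>t. ereal (g_t p r S \<mu> (sd_policy dstar) \<beta>star t)) + ereal (ln \<alpha> / \<beta>star)"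
    unfolding H_def h_inf_def g_inf_def ..
  also have "\<dots> = liminf (\<lambda>t. ereal (g_t p r S \<mu> (sd_policy dstar) \<beta>star t) + ereal (ln \<alpha> / \<beta>star))"
    by (rule Liminf_add_ereal_right[symmetric]) auto
  also have "\<dots> \<le> liminf Y" using Yge by (intro Liminf_mono always_eventually) auto
  also have "\<dots> = lim Y" using conv1 unfolding Y_def
    by (simp add: convergent_LIMSEQ_iff lim_imp_Liminf)
  finally have HY: "H \<le> lim Y" .
  have SUPle: "(SUP \<pi>\<in>HR_policies. lim (\<lambda>t. ereal (Sup ((\<lambda>\<beta>. h_t p r S \<mu> \<alpha> \<pi> \<beta> t) ` {0<..})))) \<le> H + ereal \<delta>"
    unfolding H_def
    by (rule SUP_least, rule M.main_ineq[OF alpha delta beta0 gap star_max]) auto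
  have "(SUP \<pi>\<in>HR_policies. lim (\<lambda>t. ereal (Sup ((\<lambda>\<beta>. h_t p r S \<mu> \<alpha> \<pi> \<beta> t) ` {0<..})))) - ereal \<delta> \<le> H"
    using SUPle by (cases "(SUP \<pi>\<in>HR_policies. lim (\<lambda>t. ereal (Sup ((\<lambda>\<beta>. h_t p r S \<mu> \<alpha> \<pi> \<beta> t) ` {0<..}))))"; cases H) auto
  then have fin: "(SUP \<pi>\<in>HR_policies. lim (\<lambda>t. ereal (Sup ((\<lambda>\<beta>. h_t p r S \<mu> \<alpha> \<pi> \<beta> t) ` {0<..})))) - ereal \<delta> \<le> lim Y"
    using HY by (rule order_trans)
  show ?thesis using conv1 conv_all fin unfolding Y_def by blast
qed

end
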